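(* Let $p\ge2$, $m\in\mathbb{N}$, $a,b>0$, consider the multiple regression function $f(x)=(1,x^T)^T$ on the rectangular design region $\mathcal{X}=[u_1,v_1]\times\cdots\times[u_{p-1},v_{p-1}]$ with $u_i<v_i$, and let $\beta=(\beta_0,\ldots,\beta_{p-1})^T$ with $\beta_i\neq0$ for $i=1,\ldots,p-1$. Let $d=(d_1,\ldots,d_{p-1})$ with $d_i=v_i$ if $\beta_i>0$ and $d_i=u_i$ if $\beta_i<0$. For $z>0$ define $$w_p^*(z)=\frac{2}{p+\sqrt{(p-2)^2+4(p-1)\dfrac{1+\frac{m}{b}\exp(f(d)^T\beta)}{1+\frac{m}{b}\exp(f(d)^T\beta-z)}}},\qquad w_1^*(z)=\frac{1-w_p^*(z)}{p-1}.$$ Then the equation $$0=m\Bigl((p-1)w_1^*(z)e^{f(d)^T\beta-z}+w_p^*(z)e^{f(d)^T\beta}\Bigr)\bigl(z(p-1)w_1^*(z)-2\bigr)+b\bigl(zp\,w_1^*(z)-2\bigr)$$ has a unique solution $z^*\in(0,\infty)$. If moreover $z^*\le\min_{i=1,\ldots,p-1}|\beta_i|(v_i-u_i)$, then the design $\xi^*$ which assigns weight $w_1^*(z^* )$ to each of the points $d-(z^*/\beta_i)e_i$, $i=1,\ldots,p-1$, and weight $w_p^*(z^* )$ to the point $d$, is $D$-optimal in the Poisson–Gamma model on $\mathcal{X}$.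
   Context: $e_i$ denotes the $i$-th standard unit vector of $\mathbb{R}^{p-1}$ and $e_1$ in the information matrix formula denotes the first standard unit vector of $\mathbb{R}^p$. A design $\xi$ is a probability measure on $\mathcal{X}$ with finite support $x_1,\ldots,x_l$ and weights $w_1,\ldots,w_l\ge0$, $\sum_j w_j=1$. The Poisson information matrix is $M_{Po}(\xi;\beta)=\sum_{j=1}^l w_j\exp(f(x_j)^T\beta)f(x_j)f(x_j)^T$, and the Poisson–Gamma information matrix is $M(\xi;\beta)=\frac{a}{b}\Bigl(M_{Po}(\xi;\beta)-\frac{M_{Po}(\xi;\beta)e_1e_1^TM_{Po}(\xi;\beta)}{e_1^TM_{Po}(\xi;\beta)e_1+b/m}\Bigr)$. A design $\xi^*$ is $D$-optimal if $M(\xi^*;\beta)$ is regular and $\det M(\xi^*;\beta)\ge\det M(\xi;\beta)$ for all designs $\xi$ on $\mathcal{X}$. *)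

theory Defs
  imports Complex_Main "Jordan_Normal_Form.Determinant"
begin

definition fvec :: "real vec \<Rightarrow> real vec" where
  "fvec x = vCons 1 x"

(* Rectangular design region [u_1,v_1] x ... x [u_(p-1),v_(p-1)] (0-based indices). *)
definition region :: "nat \<Rightarrow> real vec \<Rightarrow> real vec \<Rightarrow> real vec set" where
  "region p u v = {x. dim_vec x = p - 1 \<and> (\<forall>i<p - 1. u $ i \<le> x $ i \<and> x $ i \<le> v $ i)}"

(* A design = probability measure with finite support, given by its weight function. *)
definition supp :: "(real vec \<Rightarrow> real) \<Rightarrow> real vec set" where
  "supp w = {x. w x \<noteq> 0}"

definition is_design :: "real vec set \<Rightarrow> (real vec \<Rightarrow> real) \<Rightarrow> bool" where
  "is_design X w \<longleftrightarrow> finite (supp w) \<and> supp w \<subseteq> X \<and> (\<forall>x. 0 \<le> w x)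
      \<and> (\<Sum>x\<in>supp w. w x) = 1"

definition M_Po :: "nat \<Rightarrow> (real vec \<Rightarrow> real) \<Rightarrow> real vec \<Rightarrow> real mat" where
  "M_Po p w \<beta> = mat p p (\<lambda>(i,j). \<Sum>x\<in>supp w. w x * exp (fvec x \<bullet> \<beta>) * (fvec x $ i) * (fvec x $ j))"

definition M_PG :: "nat \<Rightarrow> real \<Rightarrow> real \<Rightarrow> nat \<Rightarrow> (real vec \<Rightarrow> real) \<Rightarrow> real vec \<Rightarrow> real mat" where
  "M_PG p a b m w \<beta> =
     (let P = M_Po p w \<beta>;
          e1 = unit_vec p 0
      in (a / b) \<cdot>\<^sub>m (P - (1 / (e1 \<bullet> (P *\<^sub>v e1) + b / real m)) \<cdot>\<^sub>m
                          (P * mat p p (\<lambda>(i,j). e1 $ i * e1 $ j) * P)))"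

definition D_optimal :: "nat \<Rightarrow> real \<Rightarrow> real \<Rightarrow> nat \<Rightarrow> real vec set \<Rightarrow> real vec \<Rightarrow> (real vec \<Rightarrow> real) \<Rightarrow> bool" where
  "D_optimal p a b m X \<beta> w \<longleftrightarrow> is_design X w \<and> det (M_PG p a b m w \<beta>) \<noteq> 0 \<and>
     (\<forall>w'. is_design X w' \<longrightarrow> det (M_PG p a b m w' \<beta>) \<le> det (M_PG p a b m w \<beta>))"

end

theory Submission
  imports Defs
begin

definition qf :: "nat \<Rightarrow> (nat \<Rightarrow> nat \<Rightarrow> real) \<Rightarrow> (nat \<Rightarrow> real) \<Rightarrow> real" where
  "qf n A v = (\<Sum>i<n. \<Sum>j<n. v i * A i j * v j)"

definition symm :: "nat \<Rightarrow> (nat \<Rightarrow> nat \<Rightarrow> real) \<Rightarrow> bool" where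
  "symm n A \<longleftrightarrow> (\<forall>i<n. \<forall>j<n. A i j = A j i)"

definition psd :: "nat \<Rightarrow> (nat \<Rightarrow> nat \<Rightarrow> real) \<Rightarrow> bool" where
  "psd n A \<longleftrightarrow> (\<forall>v. 0 \<le> qf n A v)"

definition pd :: "nat \<Rightarrow> (nat \<Rightarrow> nat \<Rightarrow> real) \<Rightarrow> bool" where
  "pd n A \<longleftrightarrow> (\<forall>v. (\<exists>i<n. v i \<noteq> 0) \<longrightarrow> 0 < qf n A v)"

lemma sum_delta_r: fixes f :: "nat \<Rightarrow> real" shows "(\<Sum>l\<in>S. f l * (if l = i then t else 0)) = (if i \<in> S \<and> finite S then f i * t else 0)"
proof -
  have "(\<Sum>l\<in>S. f l * (if l = i then t else 0)) = (\<Sum>l\<in>S. if l = i then f i * t else 0)" by (rule sum.cong) auto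
  also have "\<dots> = (if i \<in> S \<and> finite S then f i * t else 0)" by (cases "finite S") (auto simp: sum.delta)
  finally show ?thesis .
qed

lemma sum_delta_l: fixes f :: "nat \<Rightarrow> real" shows "(\<Sum>l\<in>S. (if l = i then t else 0) * f l) = (if i \<in> S \<and> finite S then t * f i else 0)"
proof -
  have "(\<Sum>l\<in>S. (if l = i then t else 0) * f l) = (\<Sum>l\<in>S. if l = i then t * f i else 0)" by (rule sum.cong) auto
  also have "\<dots> = (if i \<in> S \<and> finite S then t * f i else 0)" by (cases "finite S") (auto simp: sum.delta)
  finally show ?thesis .
qed

lemma qf_two:
  assumes "i < n" "j < n" "i \<noteq> j"
  shows "qf n A (\<lambda>l. (if l = i then t else 0) + (if l = j then s else 0))
         = t * A i i * t + t * A i j * s + s * A j i * t + s * A j j * s"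
proof -
  let ?v = "\<lambda>l. (if l = i then t else 0) + (if l = j then s else 0)"
  have inner: "(\<Sum>l<n. ?v k * A k l * ?v l) = ?v k * (A k i * t + A k j * s)" for k
  proof -
    have "(\<Sum>l<n. ?v k * A k l * ?v l) = ?v k * (\<Sum>l<n. A k l * ?v l)"
      by (simp add: sum_distrib_left mult.assoc)
    also have "(\<Sum>l<n. A k l * ?v l) = (\<Sum>l<n. A k l * (if l = i then t else 0)) + (\<Sum>l<n. A k l * (if l = j then s else 0))"
      by (simp add: distrib_left sum.distrib)
    also have "\<dots> = A k i * t + A k j * s" using assms by (simp only: sum_delta_r) simp
    finally show ?thesis .
  qed
  have "qf n A ?v = (\<Sum>k<n. ?v k * (A k i * t + A k j * s))"
    unfolding qf_def using inner by simp
  also have "\<dots> = (\<Sum>k<n. (if k = i then t else 0) * (A k i * t + A k j * s)) + (\<Sum>k<n. (if k = j then s else 0) * (A k i * t + A k j * s))"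
    by (simp add: distrib_right sum.distrib)
  also have "\<dots> = t * (A i i * t + A i j * s) + s * (A j i * t + A j j * s)"
    using assms by (simp only: sum_delta_l) simp
  finally show ?thesis by (simp add: algebra_simps)
qed

lemma qf_one:
  assumes "i < n"
  shows "qf n A (\<lambda>l. if l = i then t else 0) = t * A i i * t"
proof -
  have "qf n A (\<lambda>l. if l = i then t else 0) = (\<Sum>k<n. (if k = i then t else 0) * (\<Sum>l<n. A k l * (if l = i then t else 0)))"
    unfolding qf_def by (simp add: sum_distrib_left mult.assoc)
  also have "\<dots> = t * A i i * t" using assms by (simp only: sum_delta_r sum_delta_l) simp
  finally show ?thesis .
qed

lemma psd_zero_row:
  assumes "psd n A" "symm n A" "i < n" "j < n" "A i i = 0"
  shows "A i j = 0"
proof (cases "i = j")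
  case True then show ?thesis using assms by simp
next
  case False
  have h: "0 \<le> 2 * t * A i j + A j j" for t
  proof -
    have "0 \<le> qf n A (\<lambda>l. (if l = i then t else 0) + (if l = j then 1 else 0))"
      using assms(1) unfolding psd_def by blast
    also have "\<dots> = 2 * t * A i j + A j j"
      using qf_two[OF assms(3,4) False] assms(2-5) unfolding symm_def by simp
    finally show ?thesis .
  qed
  show ?thesis
  proof (rule ccontr)
    assume ne: "A i j \<noteq> 0"
    have "0 \<le> 2 * (- (A j j + 1) / (2 * A i j)) * A i j + A j j" by (rule h)
    also have "\<dots> = -1" using ne by (simp add: field_simps)
    finally show False by simp
  qed
qed

lemma qf_schur:
  fixes A :: "nat \<Rightarrow> nat \<Rightarrow> real"
  assumes sy: "symm (Suc n) A"
  shows "qf n (\<lambda>i j. A (Suc i) (Suc j) - A (Suc i) 0 * A 0 (Suc j) / A 0 0) v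
       = qf (Suc n) A (\<lambda>k. if k = 0 then -(\<Sum>j<n. A 0 (Suc j) * v j) / A 0 0 else v (k - 1))"
proof -
  define a where "a = A 0 0"
  define T where "T = (\<Sum>j<n. A 0 (Suc j) * v j)"
  define w where "w = (\<lambda>k. if k = 0 then -(\<Sum>j<n. A 0 (Suc j) * v j) / A 0 0 else v (k - 1))"
  define R where "R = (\<Sum>i<n. \<Sum>j<n. v i * A (Suc i) (Suc j) * v j)"
  have w0: "w 0 = - T / a" unfolding w_def T_def a_def by simp
  have wS: "w (Suc k) = v k" for k unfolding w_def by simp
  have T2: "(\<Sum>i<n. v i * A (Suc i) 0) = T"
    unfolding T_def using sy unfolding symm_def by (intro sum.cong) (auto simp: mult.commute)
  have "qf (Suc n) A w = (\<Sum>i<Suc n. \<Sum>j<Suc n. w i * A i j * w j)" unfolding qf_def ..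
  also have "\<dots> = (w 0 * A 0 0 * w 0 + (\<Sum>j<n. w 0 * A 0 (Suc j) * w (Suc j)))
      + (\<Sum>i<n. w (Suc i) * A (Suc i) 0 * w 0 + (\<Sum>j<n. w (Suc i) * A (Suc i) (Suc j) * w (Suc j)))"
    by (simp only: sum.lessThan_Suc_shift)
  also have "\<dots> = w 0 * a * w 0 + w 0 * T + w 0 * (\<Sum>i<n. v i * A (Suc i) 0) + R"
    unfolding wS a_def T_def R_def
    by (simp add: sum.distrib sum_distrib_left algebra_simps)
  also have "\<dots> = w 0 * a * w 0 + 2 * w 0 * T + R" using T2 by simp
  also have "\<dots> = R - T * T / a" unfolding w0
    by (cases "a = 0") (simp_all add: field_simps power2_eq_square)
  finally have L: "qf (Suc n) A w = R - T * T / a" .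
  have "qf n (\<lambda>i j. A (Suc i) (Suc j) - A (Suc i) 0 * A 0 (Suc j) / A 0 0) v
      = (\<Sum>i<n. \<Sum>j<n. v i * A (Suc i) (Suc j) * v j - (v i * A (Suc i) 0) * (A 0 (Suc j) * v j) / a)"
    unfolding qf_def a_def by (intro sum.cong refl) (simp add: algebra_simps)
  also have "\<dots> = R - (\<Sum>i<n. (v i * A (Suc i) 0) * T / a)"
    unfolding R_def T_def by (simp add: sum_subtractf sum_distrib_left sum_divide_distrib)
  also have "\<dots> = R - (\<Sum>i<n. v i * A (Suc i) 0) * T / a"
    by (simp add: sum_distrib_right sum_divide_distrib)
  also have "\<dots> = R - T * T / a" using T2 by simp
  finally show ?thesis using L unfolding w_def by simp
qed

lemma ldl:
  "symm n A \<Longrightarrow> psd n A \<Longrightarrow> \<exists>B \<delta>. (\<forall>i. B i i = 1) \<and> (\<forall>i k. i < k \<longrightarrow> B i k = 0) \<and> (\<forall>i<n. 0 \<le> \<delta> i)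
     \<and> (pd n A \<longrightarrow> (\<forall>i<n. 0 < \<delta> i)) \<and> (\<forall>i<n. \<forall>j<n. A i j = (\<Sum>k<n. B i k * \<delta> k * B j k))"
proof (induction n arbitrary: A)
  case 0
  show ?case by (intro exI[of _ "\<lambda>i k. if i = k then 1 else 0"] exI[of _ "\<lambda>_. 0"]) auto
next
  case (Suc n)
  note sy = Suc.prems(1) and ps = Suc.prems(2)
  define a where "a = A 0 0"
  define S where "S = (\<lambda>i j. A (Suc i) (Suc j) - A (Suc i) 0 * A 0 (Suc j) / A 0 0)"
  have syA: "A i j = A j i" if "i < Suc n" "j < Suc n" for i j using sy that unfolding symm_def by blast
  have a_qf: "qf (Suc n) A (\<lambda>l. if l = 0 then 1 else 0) = a" using qf_one[of 0 "Suc n" A 1] a_def by simp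
  have a0: "0 \<le> a" using ps a_qf unfolding psd_def by (metis (no_types))
  have symS: "symm n S" unfolding symm_def S_def
  proof (intro allI impI)
    fix i j assume "i < n" "j < n"
    then show "A (Suc i) (Suc j) - A (Suc i) 0 * A 0 (Suc j) / A 0 0 = A (Suc j) (Suc i) - A (Suc j) 0 * A 0 (Suc i) / A 0 0"
      using syA[of "Suc i" "Suc j"] syA[of "Suc i" 0] syA[of 0 "Suc j"] by simp
  qed
  define w where "w = (\<lambda>v k. if k = 0 then -(\<Sum>j<n. A 0 (Suc j) * v j) / A 0 0 else v (k - 1))"
  have qfS: "qf n S v = qf (Suc n) A (w v)" for v unfolding S_def w_def by (rule qf_schur[OF sy])
  have psdS: "psd n S" using ps unfolding psd_def qfS by blast
  have row0: "A 0 j = 0" if "a = 0" "j < Suc n" for j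
    using psd_zero_row[OF ps sy _ that(2)] that(1) a_def by simp
  obtain B' \<delta>' where B'1: "\<forall>i. B' i i = 1" and B'2: "\<forall>i k. i < k \<longrightarrow> B' i k = 0"
    and d'1: "\<forall>i<n. 0 \<le> \<delta>' i" and d'2: "pd n S \<longrightarrow> (\<forall>i<n. 0 < \<delta>' i)"
    and B'3: "\<forall>i<n. \<forall>j<n. S i j = (\<Sum>k<n. B' i k * \<delta>' k * B' j k)"
    using Suc.IH[OF symS psdS] by blast
  define B where "B = (\<lambda>i k. if k = 0 then (if i = 0 then 1 else A i 0 / a) else if i = 0 then 0 else B' (i - 1) (k - 1))"
  define \<delta> where "\<delta> = (\<lambda>k. if k = 0 then a else \<delta>' (k - 1))"
  have P1: "\<forall>i. B i i = 1" unfolding B_def using B'1 by simp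
  have P2: "\<forall>i k. i < k \<longrightarrow> B i k = 0" unfolding B_def using B'2 by auto
  have P3: "\<forall>i<Suc n. 0 \<le> \<delta> i" unfolding \<delta>_def using a0 d'1 by auto
  have P4: "pd (Suc n) A \<longrightarrow> (\<forall>i<Suc n. 0 < \<delta> i)"
  proof
    assume pdA: "pd (Suc n) A"
    have "0 < qf (Suc n) A (\<lambda>l. if l = 0 then 1 else 0)"
      using pdA unfolding pd_def by (rule allE) (erule impE, auto)
    then have apos: "0 < a" using a_qf by simp
    have "pd n S" unfolding pd_def
    proof (intro allI impI)
      fix v :: "nat \<Rightarrow> real" assume "\<exists>i<n. v i \<noteq> 0"
      then obtain i where "i < n" "v i \<noteq> 0" by blast
      then have "\<exists>i<Suc n. w v i \<noteq> 0" by (intro exI[of _ "Suc i"]) (simp add: w_def)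
      then show "0 < qf n S v" using pdA unfolding pd_def qfS by blast
    qed
    then show "\<forall>i<Suc n. 0 < \<delta> i" using d'2 apos unfolding \<delta>_def by auto
  qed
  have P5: "A i j = (\<Sum>k<Suc n. B i k * \<delta> k * B j k)" if ij: "i < Suc n" "j < Suc n" for i j
  proof -
    have e: "(\<Sum>k<Suc n. B i k * \<delta> k * B j k) = B i 0 * a * B j 0 + (\<Sum>k<n. B i (Suc k) * \<delta>' k * B j (Suc k))"
      by (simp only: sum.lessThan_Suc_shift) (simp add: \<delta>_def)
    show ?thesis
    proof (cases "i = 0")
      case True
      then show ?thesis unfolding e using row0 ij a_def syA[of 0 j] by (auto simp: B_def)
    next
      case i: False
      show ?thesis
      proof (cases "j = 0")
        case True
        then show ?thesis unfolding e using row0 ij a_def syA[of 0 i] i by (auto simp: B_def)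
      next
        case j: False
        obtain i' j' where ii: "i = Suc i'" and jj: "j = Suc j'" using i j not0_implies_Suc by blast
        have "(\<Sum>k<n. B i (Suc k) * \<delta>' k * B j (Suc k)) = S i' j'"
          using B'3 ij unfolding ii jj B_def by simp
        moreover have "B i 0 * a * B j 0 = A i 0 * A 0 j / a"
          using i j syA[of 0 j] ij by (cases "a = 0") (auto simp: B_def)
        ultimately have "B i 0 * a * B j 0 + (\<Sum>k<n. B i (Suc k) * \<delta>' k * B j (Suc k)) = A i j"
          unfolding S_def ii jj a_def by simp
        then show ?thesis using e by simp
      qed
    qed
  qed
  show ?case using P1 P2 P3 P4 P5 by blast
qed

definition fm :: "nat \<Rightarrow> (nat \<Rightarrow> nat \<Rightarrow> real) \<Rightarrow> real mat" where
  "fm n A = mat n n (\<lambda>(i,j). A i j)"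

lemma fm_carrier[simp]: "fm n A \<in> carrier_mat n n" unfolding fm_def by simp

lemma fm_dims[simp]: "dim_row (fm n A) = n" "dim_col (fm n A) = n" unfolding fm_def by simp_all

lemma fm_index[simp]: "i < n \<Longrightarrow> j < n \<Longrightarrow> fm n A $$ (i,j) = A i j" unfolding fm_def by simp

lemma fm_mult: "fm n A * fm n B = fm n (\<lambda>i j. \<Sum>k<n. A i k * B k j)"
  by (rule eq_matI) (auto simp: fm_def scalar_prod_def lessThan_atLeast0 intro!: sum.cong)

lemma det_ldl:
  assumes "\<forall>i. B i i = 1" "\<forall>i k. i < k \<longrightarrow> B i k = 0"
    and A: "\<forall>i<n. \<forall>j<n. A i j = (\<Sum>k<n. B i k * \<delta> k * B j k)"
  shows "det (fm n A) = (\<Prod>i<n. \<delta> i)"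
proof -
  have eq: "fm n A = fm n B * fm n (\<lambda>i j. \<delta> i * B j i)"
    unfolding fm_mult by (rule eq_matI) (auto simp: A fm_def mult.assoc)
  have d1: "det (fm n B) = 1"
    by (subst det_lower_triangular[of n]) (use assms in \<open>auto simp: prod_list_diag_prod\<close>)
  have d2: "det (fm n (\<lambda>i j. \<delta> i * B j i)) = (\<Prod>i<n. \<delta> i)"
    by (subst det_upper_triangular[of _ n]) (use assms in \<open>auto simp: prod_list_diag_prod upper_triangular_def atLeast0LessThan\<close>)
  show ?thesis unfolding eq using d1 d2 by (simp add: det_mult[of _ n])
qed

lemma hadamard:
  assumes "symm n A" "psd n A"
  shows "det (fm n A) \<le> (\<Prod>i<n. A i i)"
proof -
  obtain B \<delta> where B1: "\<forall>i. B i i = 1" and B2: "\<forall>i k. i < k \<longrightarrow> B i k = 0"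
    and d1: "\<forall>i<n. 0 \<le> \<delta> i" and B3: "\<forall>i<n. \<forall>j<n. A i j = (\<Sum>k<n. B i k * \<delta> k * B j k)"
    using ldl[OF assms] by blast
  have "det (fm n A) = (\<Prod>i<n. \<delta> i)" by (rule det_ldl[OF B1 B2 B3])
  also have "\<dots> \<le> (\<Prod>i<n. A i i)"
  proof (rule prod_mono)
    fix i assume i: "i \<in> {..<n}"
    have "\<delta> i = B i i * \<delta> i * B i i" using B1 by simp
    also have "\<dots> \<le> (\<Sum>k<n. B i k * \<delta> k * B i k)"
      by (rule member_le_sum[where f = "\<lambda>k. B i k * \<delta> k * B i k"]) (use i d1 in \<open>auto simp: mult.commute mult.left_commute\<close>)
    finally show "0 \<le> \<delta> i \<and> \<delta> i \<le> A i i" using B3 i d1 by auto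
  qed
  finally show ?thesis .
qed

lemma qf_ldl:
  fixes B :: "nat \<Rightarrow> nat \<Rightarrow> real"
  shows "qf n (\<lambda>i j. \<Sum>m<n. B i m * \<delta> m * B j m) u = (\<Sum>m<n. \<delta> m * (\<Sum>i<n. B i m * u i)\<^sup>2)"
proof -
  have "qf n (\<lambda>i j. \<Sum>m<n. B i m * \<delta> m * B j m) u = (\<Sum>i<n. \<Sum>j<n. \<Sum>m<n. \<delta> m * (B i m * u i) * (B j m * u j))"
    unfolding qf_def by (simp add: sum_distrib_left sum_distrib_right algebra_simps)
  also have "\<dots> = (\<Sum>i<n. \<Sum>m<n. \<Sum>j<n. \<delta> m * (B i m * u i) * (B j m * u j))"
    by (rule sum.cong[OF refl], rule sum.swap)
  also have "\<dots> = (\<Sum>m<n. \<Sum>i<n. \<Sum>j<n. \<delta> m * (B i m * u i) * (B j m * u j))"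
    by (rule sum.swap)
  also have "\<dots> = (\<Sum>m<n. \<delta> m * (\<Sum>i<n. B i m * u i)\<^sup>2)"
    by (simp add: power2_eq_square sum_distrib_left sum_distrib_right algebra_simps)
  finally show ?thesis .
qed

lemma qf_cong:
  fixes C X :: "nat \<Rightarrow> nat \<Rightarrow> real"
  shows "qf n (\<lambda>i j. \<Sum>k<n. \<Sum>l<n. C i k * X k l * C j l) v = qf n X (\<lambda>k. \<Sum>i<n. v i * C i k)"
proof -
  have "qf n (\<lambda>i j. \<Sum>k<n. \<Sum>l<n. C i k * X k l * C j l) v
      = (\<Sum>i<n. \<Sum>j<n. \<Sum>k<n. \<Sum>l<n. (v i * C i k) * X k l * (v j * C j l))"
    unfolding qf_def by (simp add: sum_distrib_left sum_distrib_right algebra_simps)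
  also have "\<dots> = (\<Sum>i<n. \<Sum>k<n. \<Sum>j<n. \<Sum>l<n. (v i * C i k) * X k l * (v j * C j l))"
    by (rule sum.cong[OF refl], rule sum.swap)
  also have "\<dots> = (\<Sum>k<n. \<Sum>i<n. \<Sum>j<n. \<Sum>l<n. (v i * C i k) * X k l * (v j * C j l))"
    by (rule sum.swap)
  also have "\<dots> = (\<Sum>k<n. \<Sum>i<n. \<Sum>l<n. \<Sum>j<n. (v i * C i k) * X k l * (v j * C j l))"
    by (rule sum.cong[OF refl], rule sum.cong[OF refl], rule sum.swap)
  also have "\<dots> = (\<Sum>k<n. \<Sum>l<n. \<Sum>i<n. \<Sum>j<n. (v i * C i k) * X k l * (v j * C j l))"
    by (rule sum.cong[OF refl], rule sum.swap)
  also have "\<dots> = qf n X (\<lambda>k. \<Sum>i<n. v i * C i k)"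
    unfolding qf_def by (simp add: sum_distrib_left sum_distrib_right algebra_simps)
  finally show ?thesis .
qed

lemma det_unit_lower:
  assumes "\<forall>i. B i i = 1" "\<forall>i k. i < k \<longrightarrow> B i k = 0"
  shows "det (fm n B) = 1"
  by (subst det_lower_triangular[of n]) (use assms in \<open>auto simp: prod_list_diag_prod\<close>)

lemma pd_psd: "pd n Y \<Longrightarrow> psd n Y"
  unfolding psd_def
proof
  fix v assume pY: "pd n Y"
  show "0 \<le> qf n Y v"
  proof (cases "\<exists>i<n. v i \<noteq> 0")
    case True then show ?thesis using pY unfolding pd_def by (simp add: less_imp_le)
  next
    case False then show ?thesis unfolding qf_def by simp
  qed
qed

lemma exp_prod_bound:
  fixes y :: "nat \<Rightarrow> real"
  assumes "\<forall>i<n. 0 \<le> y i" "(\<Sum>i<n. y i) \<le> real n"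
  shows "(\<Prod>i<n. y i) \<le> 1"
proof -
  have "(\<Prod>i<n. y i) \<le> (\<Prod>i<n. exp (y i - 1))"
    by (rule prod_mono) (use assms in \<open>auto simp: exp_ge_add_one_self[of "y _ - 1", simplified]\<close>)
  also have "\<dots> = exp (\<Sum>i<n. (y i - 1))" by (simp add: exp_sum)
  also have "\<dots> = exp ((\<Sum>i<n. y i) - real n)" by (simp add: sum_subtractf)
  also have "\<dots> \<le> 1" using assms by simp
  finally show ?thesis .
qed

lemma GL:
  fixes X Y :: "nat \<Rightarrow> nat \<Rightarrow> real" and K :: "'k set" and \<nu> \<tau> :: "'k \<Rightarrow> real" and g :: "'k \<Rightarrow> nat \<Rightarrow> real"
  assumes sX: "symm n X" and pX: "psd n X" and sY: "symm n Y" and pY: "pd n Y"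
    and fK: "finite K" and nu: "\<forall>k\<in>K. 0 \<le> \<nu> k"
    and bnd: "\<forall>v. qf n X v \<le> (\<Sum>k\<in>K. \<nu> k * (\<Sum>i<n. g k i * v i)\<^sup>2)"
    and tau: "\<forall>k\<in>K. \<forall>u. 2 * (\<Sum>i<n. g k i * u i) - qf n Y u \<le> \<tau> k"
    and st: "(\<Sum>k\<in>K. \<nu> k * \<tau> k) \<le> real n"
  shows "det (fm n X) \<le> det (fm n Y) \<and> 0 < det (fm n Y)"
proof -
  obtain B \<delta> where B1: "\<forall>i. B i i = 1" and B2: "\<forall>i k. i < k \<longrightarrow> B i k = 0"
    and d1: "\<forall>i<n. 0 < \<delta> i" and B3: "\<forall>i<n. \<forall>j<n. Y i j = (\<Sum>k<n. B i k * \<delta> k * B j k)"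
    using ldl[OF sY pd_psd[OF pY]] pY by blast
  have detY: "det (fm n Y) = (\<Prod>i<n. \<delta> i)" by (rule det_ldl[OF B1 B2 B3])
  have detYpos: "0 < det (fm n Y)" unfolding detY using d1 by (intro prod_pos) auto
  have dB: "det (fm n B) = 1" by (rule det_unit_lower[OF B1 B2])
  have "fm n B \<in> Units (ring_mat TYPE(real) n ())"
    by (rule det_non_zero_imp_unit) (use dB in auto)
  then obtain Cm where Cm: "Cm \<in> carrier_mat n n" "Cm * fm n B = 1\<^sub>m n"
    unfolding Units_def ring_mat_def by auto
  define C where "C = (\<lambda>i j. Cm $$ (i,j))"
  have Cm_eq: "Cm = fm n C" using Cm(1) by (intro eq_matI) (auto simp: C_def)
  have CB: "(\<Sum>j<n. C i j * B j m) = (if i = m then 1 else 0)" if "i < n" "m < n" for i m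
  proof -
    have "(fm n C * fm n B) $$ (i,m) = (1\<^sub>m n) $$ (i,m)" using Cm(2) Cm_eq by simp
    then show ?thesis unfolding fm_mult using that by simp
  qed
  have dC: "det (fm n C) = 1"
  proof -
    have "det (fm n C * fm n B) = 1" using Cm Cm_eq by simp
    then show ?thesis using dB by (simp add: det_mult[of _ n])
  qed
  define Z where "Z = (\<lambda>i j. \<Sum>k<n. \<Sum>l<n. C i k * X k l * C j l)"
  have Zeq: "fm n Z = fm n C * fm n X * transpose_mat (fm n C)"
  proof -
    have T: "transpose_mat (fm n C) = fm n (\<lambda>i j. C j i)" by (rule eq_matI) auto
    have "fm n C * fm n X * transpose_mat (fm n C) = fm n (\<lambda>i j. \<Sum>l<n. (\<Sum>k<n. C i k * X k l) * C j l)"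
      by (simp only: T fm_mult)
    also have "(\<lambda>i j. \<Sum>l<n. (\<Sum>k<n. C i k * X k l) * C j l) = Z"
    proof (intro ext)
      fix i j
      have "(\<Sum>l<n. (\<Sum>k<n. C i k * X k l) * C j l) = (\<Sum>l<n. \<Sum>k<n. C i k * X k l * C j l)"
        by (simp add: sum_distrib_right)
      also have "\<dots> = Z i j" unfolding Z_def by (rule sum.swap)
      finally show "(\<Sum>l<n. (\<Sum>k<n. C i k * X k l) * C j l) = Z i j" .
    qed
    finally show ?thesis by simp
  qed
  have detZ: "det (fm n Z) = det (fm n X)"
  proof -
    have "det (fm n C * fm n X * transpose_mat (fm n C)) = det (fm n C * fm n X) * det (transpose_mat (fm n C))"
      by (rule det_mult[of _ n]) auto
    also have "\<dots> = det (fm n C) * det (fm n X) * det (fm n C)"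
      by (simp add: det_mult[of _ n] det_transpose[of _ n])
    finally show ?thesis unfolding Zeq using dC by simp
  qed
  have sZ: "symm n Z" unfolding symm_def Z_def
  proof (intro allI impI)
    fix i j assume "i < n" "j < n"
    have "(\<Sum>k<n. \<Sum>l<n. C i k * X k l * C j l) = (\<Sum>l<n. \<Sum>k<n. C i k * X k l * C j l)"
      by (rule sum.swap)
    also have "\<dots> = (\<Sum>l<n. \<Sum>k<n. C j l * X l k * C i k)"
      using sX unfolding symm_def by (intro sum.cong refl) (auto simp: mult.commute)
    finally show "(\<Sum>k<n. \<Sum>l<n. C i k * X k l * C j l) = (\<Sum>k<n. \<Sum>l<n. C j k * X k l * C i l)" .
  qed
  have pZ: "psd n Z" using pX unfolding psd_def Z_def qf_cong by blast
  have had: "det (fm n Z) \<le> (\<Prod>i<n. Z i i)" by (rule hadamard[OF sZ pZ])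
  have Zii: "Z i i = qf n X (C i)" for i unfolding Z_def qf_def by simp
  define G where "G = (\<lambda>k i. \<Sum>l<n. g k l * C i l)"
  have Zle: "Z i i \<le> (\<Sum>k\<in>K. \<nu> k * (G k i)\<^sup>2)" for i
    unfolding Zii G_def using bnd by blast
  have Z0: "0 \<le> Z i i" for i unfolding Zii using pX unfolding psd_def by blast
  have key: "(\<Sum>i<n. (G k i)\<^sup>2 / \<delta> i) \<le> \<tau> k" if k: "k \<in> K" for k
  proof -
    define u where "u = (\<lambda>l. \<Sum>i<n. C i l * G k i / \<delta> i)"
    have a: "(\<Sum>l<n. g k l * u l) = (\<Sum>i<n. (G k i)\<^sup>2 / \<delta> i)"
    proof -
      have "(\<Sum>l<n. g k l * u l) = (\<Sum>l<n. \<Sum>i<n. g k l * C i l * G k i / \<delta> i)"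
        unfolding u_def by (simp add: sum_distrib_left mult.assoc)
      also have "\<dots> = (\<Sum>i<n. \<Sum>l<n. g k l * C i l * G k i / \<delta> i)" by (rule sum.swap)
      also have "\<dots> = (\<Sum>i<n. (G k i)\<^sup>2 / \<delta> i)"
        unfolding G_def by (simp add: power2_eq_square sum_distrib_right sum_divide_distrib)
      finally show ?thesis .
    qed
    have bu: "(\<Sum>i<n. B i m * u i) = G k m / \<delta> m" if m: "m < n" for m
    proof -
      have "(\<Sum>i<n. B i m * u i) = (\<Sum>i<n. \<Sum>j<n. C j i * B i m * (G k j / \<delta> j))"
        unfolding u_def by (simp add: sum_distrib_left algebra_simps)
      also have "\<dots> = (\<Sum>j<n. \<Sum>i<n. C j i * B i m * (G k j / \<delta> j))" by (rule sum.swap)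
      also have "\<dots> = (\<Sum>j<n. (\<Sum>i<n. C j i * B i m) * (G k j / \<delta> j))"
        by (simp only: sum_distrib_right)
      also have "\<dots> = (\<Sum>j<n. (if j = m then G k j / \<delta> j else 0))"
        using CB m by (intro sum.cong refl) auto
      also have "\<dots> = G k m / \<delta> m" using m by (simp add: sum.delta)
      finally show ?thesis .
    qed
    have "qf n Y u = qf n (\<lambda>i j. \<Sum>m<n. B i m * \<delta> m * B j m) u"
      unfolding qf_def using B3 by (intro sum.cong refl) auto
    also have "\<dots> = (\<Sum>m<n. \<delta> m * (\<Sum>i<n. B i m * u i)\<^sup>2)" by (rule qf_ldl)
    also have "\<dots> = (\<Sum>m<n. (G k m)\<^sup>2 / \<delta> m)"
      using bu d1 by (intro sum.cong refl) (auto simp: power2_eq_square field_simps)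
    finally have b: "qf n Y u = (\<Sum>m<n. (G k m)\<^sup>2 / \<delta> m)" .
    have "2 * (\<Sum>i<n. g k i * u i) - qf n Y u \<le> \<tau> k" using tau k by blast
    then show ?thesis unfolding a b by simp
  qed
  define y where "y = (\<lambda>i. Z i i / \<delta> i)"
  have y0: "\<forall>i<n. 0 \<le> y i" unfolding y_def using Z0 d1 by (auto intro: divide_nonneg_pos)
  have "(\<Sum>i<n. y i) \<le> (\<Sum>i<n. \<Sum>k\<in>K. \<nu> k * (G k i)\<^sup>2 / \<delta> i)"
  proof (rule sum_mono)
    fix i assume i: "i \<in> {..<n}"
    have "y i \<le> (\<Sum>k\<in>K. \<nu> k * (G k i)\<^sup>2) / \<delta> i"
      unfolding y_def by (rule divide_right_mono[OF Zle]) (use d1 i in \<open>auto simp: less_imp_le\<close>)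
    then show "y i \<le> (\<Sum>k\<in>K. \<nu> k * (G k i)\<^sup>2 / \<delta> i)" by (simp add: sum_divide_distrib)
  qed
  also have "\<dots> = (\<Sum>k\<in>K. \<nu> k * (\<Sum>i<n. (G k i)\<^sup>2 / \<delta> i))"
    by (subst sum.swap) (simp add: sum_distrib_left)
  also have "\<dots> \<le> (\<Sum>k\<in>K. \<nu> k * \<tau> k)"
    using key nu by (intro sum_mono mult_left_mono) auto
  also have "\<dots> \<le> real n" by (rule st)
  finally have ysum: "(\<Sum>i<n. y i) \<le> real n" .
  have "(\<Prod>i<n. Z i i) = (\<Prod>i<n. \<delta> i * y i)"
    unfolding y_def using d1 by (intro prod.cong refl) auto
  also have "\<dots> = (\<Prod>i<n. \<delta> i) * (\<Prod>i<n. y i)" by (rule prod.distrib)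
  also have "\<dots> \<le> (\<Prod>i<n. \<delta> i)"
  proof -
    have "(\<Prod>i<n. y i) \<le> 1" by (rule exp_prod_bound[OF y0 ysum])
    moreover have "0 \<le> (\<Prod>i<n. \<delta> i)" using d1 by (intro prod_nonneg) (auto simp: less_imp_le)
    ultimately show ?thesis by (simp add: mult_left_le)
  qed
  finally show ?thesis using had detZ detY detYpos by simp
qed

lemma Xg_qf:
  fixes S :: "'a set" and \<nu> :: "'a \<Rightarrow> real" and F :: "'a \<Rightarrow> nat \<Rightarrow> real"
  assumes fS: "finite S" and n: "n > 0" and F0: "\<forall>x\<in>S. F x 0 = 1" and Nc: "(\<Sum>x\<in>S. \<nu> x) + c \<noteq> 0"
  shows "qf n (\<lambda>i j. (\<Sum>x\<in>S. \<nu> x * F x i * F x j) - (\<Sum>x\<in>S. \<nu> x * F x i * F x 0) * (\<Sum>x\<in>S. \<nu> x * F x 0 * F x j) / ((\<Sum>x\<in>S. \<nu> x * F x 0 * F x 0) + c)) v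
    = (\<Sum>x\<in>S. \<nu> x * ((\<Sum>i<n. F x i * v i) + \<alpha>)\<^sup>2) + c * \<alpha>\<^sup>2
      - ((\<Sum>x\<in>S. \<nu> x) + c) * (\<alpha> + (\<Sum>x\<in>S. \<nu> x * (\<Sum>i<n. F x i * v i)) / ((\<Sum>x\<in>S. \<nu> x) + c))\<^sup>2"
proof -
  define t where "t x = (\<Sum>i<n. F x i * v i)" for x
  define N where "N = (\<Sum>x\<in>S. \<nu> x)"
  define T where "T = (\<Sum>x\<in>S. \<nu> x * t x)"
  have P00: "(\<Sum>x\<in>S. \<nu> x * F x 0 * F x 0) = N" unfolding N_def using F0 by (intro sum.cong) auto
  have f0: "(\<Sum>x\<in>S. \<nu> x * F x i * F x 0) = (\<Sum>x\<in>S. \<nu> x * F x i)" for i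
    using F0 by (intro sum.cong) auto
  have f0': "(\<Sum>x\<in>S. \<nu> x * F x 0 * F x j) = (\<Sum>x\<in>S. \<nu> x * F x j)" for j
    using F0 by (intro sum.cong) auto
  have Pi0: "(\<Sum>i<n. v i * (\<Sum>x\<in>S. \<nu> x * F x i * F x 0)) = T"
  proof -
    have "(\<Sum>i<n. v i * (\<Sum>x\<in>S. \<nu> x * F x i * F x 0)) = (\<Sum>i<n. \<Sum>x\<in>S. \<nu> x * (F x i * v i))"
      unfolding f0 by (auto simp: sum_distrib_left intro!: sum.cong)
    also have "\<dots> = (\<Sum>x\<in>S. \<nu> x * t x)" unfolding t_def by (subst sum.swap) (simp add: sum_distrib_left)
    finally show ?thesis unfolding T_def .
  qed
  have P0j: "(\<Sum>j<n. (\<Sum>x\<in>S. \<nu> x * F x 0 * F x j) * v j) = T"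
  proof -
    have "(\<Sum>j<n. (\<Sum>x\<in>S. \<nu> x * F x 0 * F x j) * v j) = (\<Sum>j<n. \<Sum>x\<in>S. \<nu> x * (F x j * v j))"
      unfolding f0' by (auto simp: sum_distrib_right intro!: sum.cong)
    also have "\<dots> = (\<Sum>x\<in>S. \<nu> x * t x)" unfolding t_def by (subst sum.swap) (simp add: sum_distrib_left)
    finally show ?thesis unfolding T_def .
  qed
  have Pq: "(\<Sum>i<n. \<Sum>j<n. v i * (\<Sum>x\<in>S. \<nu> x * F x i * F x j) * v j) = (\<Sum>x\<in>S. \<nu> x * (t x)\<^sup>2)"
  proof -
    have "(\<Sum>i<n. \<Sum>j<n. v i * (\<Sum>x\<in>S. \<nu> x * F x i * F x j) * v j) = (\<Sum>i<n. \<Sum>j<n. \<Sum>x\<in>S. \<nu> x * (F x i * v i) * (F x j * v j))"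
      by (simp add: sum_distrib_left sum_distrib_right algebra_simps)
    also have "\<dots> = (\<Sum>i<n. \<Sum>x\<in>S. \<Sum>j<n. \<nu> x * (F x i * v i) * (F x j * v j))"
      by (rule sum.cong[OF refl], rule sum.swap)
    also have "\<dots> = (\<Sum>x\<in>S. \<Sum>i<n. \<Sum>j<n. \<nu> x * (F x i * v i) * (F x j * v j))"
      by (rule sum.swap)
    also have "\<dots> = (\<Sum>x\<in>S. \<nu> x * (t x)\<^sup>2)"
      unfolding t_def by (simp add: power2_eq_square sum_distrib_left sum_distrib_right algebra_simps)
    finally show ?thesis .
  qed
  have "qf n (\<lambda>i j. (\<Sum>x\<in>S. \<nu> x * F x i * F x j) - (\<Sum>x\<in>S. \<nu> x * F x i * F x 0) * (\<Sum>x\<in>S. \<nu> x * F x 0 * F x j) / ((\<Sum>x\<in>S. \<nu> x * F x 0 * F x 0) + c)) v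
    = (\<Sum>i<n. \<Sum>j<n. v i * (\<Sum>x\<in>S. \<nu> x * F x i * F x j) * v j)
      - (\<Sum>i<n. \<Sum>j<n. (v i * (\<Sum>x\<in>S. \<nu> x * F x i * F x 0)) * ((\<Sum>x\<in>S. \<nu> x * F x 0 * F x j) * v j) / (N + c))"
    unfolding qf_def P00 by (simp add: sum_subtractf algebra_simps)
  also have "(\<Sum>i<n. \<Sum>j<n. (v i * (\<Sum>x\<in>S. \<nu> x * F x i * F x 0)) * ((\<Sum>x\<in>S. \<nu> x * F x 0 * F x j) * v j) / (N + c))
      = (\<Sum>i<n. v i * (\<Sum>x\<in>S. \<nu> x * F x i * F x 0)) * (\<Sum>j<n. (\<Sum>x\<in>S. \<nu> x * F x 0 * F x j) * v j) / (N + c)"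
    by (simp only: sum_product sum_divide_distrib)
  also have "\<dots> = T * T / (N + c)" unfolding Pi0 P0j ..
  finally have L: "qf n (\<lambda>i j. (\<Sum>x\<in>S. \<nu> x * F x i * F x j) - (\<Sum>x\<in>S. \<nu> x * F x i * F x 0) * (\<Sum>x\<in>S. \<nu> x * F x 0 * F x j) / ((\<Sum>x\<in>S. \<nu> x * F x 0 * F x 0) + c)) v
      = (\<Sum>x\<in>S. \<nu> x * (t x)\<^sup>2) - T * T / (N + c)" unfolding Pq .
  have R: "(\<Sum>x\<in>S. \<nu> x * (t x + \<alpha>)\<^sup>2) = (\<Sum>x\<in>S. \<nu> x * (t x)\<^sup>2) + 2 * \<alpha> * T + \<alpha>\<^sup>2 * N"
    unfolding T_def N_def by (simp add: power2_eq_square algebra_simps sum.distrib sum_distrib_left sum_distrib_right)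
  have NC: "N + c \<noteq> 0" using Nc unfolding N_def .
  define K where "K = N + c"
  have KK: "K \<noteq> 0" unfolding K_def by (rule NC)
  have e1: "\<alpha> + T / K = (K * \<alpha> + T) / K" using KK by (simp add: field_simps)
  have e2: "K * ((K * \<alpha> + T) / K)\<^sup>2 = (K * \<alpha> + T)\<^sup>2 / K" using KK by (simp add: power2_eq_square)
  have e3: "(K * \<alpha> + T)\<^sup>2 / K = K * \<alpha>\<^sup>2 + 2 * \<alpha> * T + T * T / K"
  proof -
    have "(K * \<alpha> + T)\<^sup>2 = K * (K * \<alpha>\<^sup>2 + 2 * \<alpha> * T) + T * T" by (simp add: power2_eq_square algebra_simps)
    then have "(K * \<alpha> + T)\<^sup>2 / K = K * (K * \<alpha>\<^sup>2 + 2 * \<alpha> * T) / K + T * T / K" by (simp add: add_divide_distrib)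
    then show ?thesis using KK by simp
  qed
  have fin: "K * (\<alpha> + T / K)\<^sup>2 = K * \<alpha>\<^sup>2 + 2 * \<alpha> * T + T * T / K" unfolding e1 e2 e3 ..
  show ?thesis unfolding t_def[symmetric] N_def[symmetric] T_def[symmetric] L R K_def[symmetric] fin
    unfolding K_def by (simp add: algebra_simps)
qed

lemma tau_aux: "(\<nu>::real) > 0 \<Longrightarrow> 2 * a * y - \<nu> * y\<^sup>2 \<le> a\<^sup>2 / \<nu>"
proof -
  assume nu: "\<nu> > 0"
  have "0 \<le> \<nu> * (y - a / \<nu>)\<^sup>2" using nu by simp
  also have "\<nu> * (y - a / \<nu>)\<^sup>2 = \<nu> * y\<^sup>2 - 2 * a * y + a\<^sup>2 / \<nu>" using nu by (simp add: power2_eq_square field_simps)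
  finally show ?thesis by simp
qed

definition Xg :: "'a set \<Rightarrow> ('a \<Rightarrow> real) \<Rightarrow> ('a \<Rightarrow> nat \<Rightarrow> real) \<Rightarrow> real \<Rightarrow> nat \<Rightarrow> nat \<Rightarrow> real" where
  "Xg S \<nu> F c i j = (\<Sum>x\<in>S. \<nu> x * F x i * F x j) - (\<Sum>x\<in>S. \<nu> x * F x i * F x 0) * (\<Sum>x\<in>S. \<nu> x * F x 0 * F x j) / ((\<Sum>x\<in>S. \<nu> x * F x 0 * F x 0) + c)"

lemma Xg_symm: "symm n (Xg S \<nu> F c)"
  unfolding symm_def Xg_def by (auto simp: mult_ac)

lemma Xg_qf':
  assumes "finite S" "n > 0" "\<forall>x\<in>S. F x 0 = 1" "(\<Sum>x\<in>S. \<nu> x) + c \<noteq> 0"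
  shows "qf n (Xg S \<nu> F c) v
    = (\<Sum>x\<in>S. \<nu> x * ((\<Sum>i<n. F x i * v i) + \<alpha>)\<^sup>2) + c * \<alpha>\<^sup>2
      - ((\<Sum>x\<in>S. \<nu> x) + c) * (\<alpha> + (\<Sum>x\<in>S. \<nu> x * (\<Sum>i<n. F x i * v i)) / ((\<Sum>x\<in>S. \<nu> x) + c))\<^sup>2"
  using Xg_qf[where S=S and n=n and F=F and \<nu>=\<nu> and c=c and v=v and \<alpha>=\<alpha>, OF assms] unfolding Xg_def[abs_def] .

lemma Xg_qf_opt:
  assumes "finite S" "n > 0" "\<forall>x\<in>S. F x 0 = 1" "(\<Sum>x\<in>S. \<nu> x) + c \<noteq> 0"
  shows "qf n (Xg S \<nu> F c) v = (\<Sum>x\<in>S. \<nu> x * ((\<Sum>i<n. F x i * v i) + (- (\<Sum>x\<in>S. \<nu> x * (\<Sum>i<n. F x i * v i)) / ((\<Sum>x\<in>S. \<nu> x) + c)))\<^sup>2)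
     + c * (- (\<Sum>x\<in>S. \<nu> x * (\<Sum>i<n. F x i * v i)) / ((\<Sum>x\<in>S. \<nu> x) + c))\<^sup>2"
  using Xg_qf'[where S=S and n=n and F=F and \<nu>=\<nu> and c=c and v=v and \<alpha>="- (\<Sum>x\<in>S. \<nu> x * (\<Sum>i<n. F x i * v i)) / ((\<Sum>x\<in>S. \<nu> x) + c)", OF assms(1-4)] by simp

lemma Xg_bound:
  assumes "finite S" "n > 0" "\<forall>x\<in>S. F x 0 = 1" "(\<Sum>x\<in>S. \<nu> x) + c > 0"
  shows "qf n (Xg S \<nu> F c) v \<le> (\<Sum>x\<in>S. \<nu> x * ((\<Sum>i<n. F x i * v i) + \<alpha>)\<^sup>2) + c * \<alpha>\<^sup>2"
proof -
  have "0 \<le> ((\<Sum>x\<in>S. \<nu> x) + c) * (\<alpha> + (\<Sum>x\<in>S. \<nu> x * (\<Sum>i<n. F x i * v i)) / ((\<Sum>x\<in>S. \<nu> x) + c))\<^sup>2"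
    using assms(4) by simp
  then show ?thesis using Xg_qf'[where S=S and n=n and F=F and \<nu>=\<nu> and c=c and v=v and \<alpha>=\<alpha>, OF assms(1-3)] assms(4) by simp
qed

lemma Xg_psd:
  assumes "finite S" "n > 0" "\<forall>x\<in>S. F x 0 = 1" "\<forall>x\<in>S. 0 \<le> \<nu> x" "c > 0"
  shows "psd n (Xg S \<nu> F c)"
  unfolding psd_def
proof
  fix v
  have Nc: "(\<Sum>x\<in>S. \<nu> x) + c > 0" using assms(4,5) by (simp add: add_nonneg_pos sum_nonneg)
  then have "(\<Sum>x\<in>S. \<nu> x) + c \<noteq> 0" by simp
  note e = Xg_qf_opt[where S=S and n=n and F=F and \<nu>=\<nu> and c=c and v=v, OF assms(1-3) this]
  show "0 \<le> qf n (Xg S \<nu> F c) v" unfolding e using assms(4,5)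
    by (intro add_nonneg_nonneg sum_nonneg mult_nonneg_nonneg) auto
qed

lemma Xg_pd:
  assumes "finite S" "n > 0" "\<forall>x\<in>S. F x 0 = 1" "\<forall>x\<in>S. 0 < \<nu> x" "c > 0"
    and span: "\<And>v. (\<forall>x\<in>S. (\<Sum>i<n. F x i * v i) = 0) \<Longrightarrow> \<forall>i<n. v i = 0"
  shows "pd n (Xg S \<nu> F c)"
  unfolding pd_def
proof (intro allI impI)
  fix v :: "nat \<Rightarrow> real" assume nz: "\<exists>i<n. v i \<noteq> 0"
  have Nc: "(\<Sum>x\<in>S. \<nu> x) + c > 0" using assms(4,5) by (simp add: add_nonneg_pos sum_nonneg less_imp_le)
  then have "(\<Sum>x\<in>S. \<nu> x) + c \<noteq> 0" by simp
  define \<alpha> where "\<alpha> = - (\<Sum>x\<in>S. \<nu> x * (\<Sum>i<n. F x i * v i)) / ((\<Sum>x\<in>S. \<nu> x) + c)"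
  note e = Xg_qf_opt[where S=S and n=n and F=F and \<nu>=\<nu> and c=c and v=v, OF assms(1-3) \<open>(\<Sum>x\<in>S. \<nu> x) + c \<noteq> 0\<close>, folded \<alpha>_def]
  define A where "A = (\<Sum>x\<in>S. \<nu> x * ((\<Sum>i<n. F x i * v i) + \<alpha>)\<^sup>2)"
  have A0: "0 \<le> A" unfolding A_def using assms(4) by (intro sum_nonneg mult_nonneg_nonneg) (auto simp: less_imp_le)
  show "0 < qf n (Xg S \<nu> F c) v"
  proof (rule ccontr)
    assume "\<not> ?thesis"
    then have le: "A + c * \<alpha>\<^sup>2 \<le> 0" unfolding e A_def by simp
    have c0: "c * \<alpha>\<^sup>2 \<ge> 0" using assms(5) by simp
    have "c * \<alpha>\<^sup>2 = 0" using le A0 c0 by linarith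
    then have a0: "\<alpha> = 0" using assms(5) by simp
    have "A = 0" using le A0 c0 by linarith
    then have "\<forall>x\<in>S. \<nu> x * ((\<Sum>i<n. F x i * v i) + \<alpha>)\<^sup>2 = 0"
      unfolding A_def using assms(1,4) by (subst (asm) sum_nonneg_eq_0_iff) (auto simp: less_imp_le)
    then have "\<forall>x\<in>S. (\<Sum>i<n. F x i * v i) = 0"
    proof (intro ballI)
      fix x assume x: "x \<in> S" and h: "\<forall>x\<in>S. \<nu> x * ((\<Sum>i<n. F x i * v i) + \<alpha>)\<^sup>2 = 0"
      have "\<nu> x \<noteq> 0" using assms(4) x by auto
      then show "(\<Sum>i<n. F x i * v i) = 0" using h x a0 by auto
    qed
    then have "\<forall>i<n. v i = 0" by (rule span)
    then show False using nz by blast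
  qed
qed

lemma Xg_tau:
  assumes fS: "finite S" and n: "n > 0" and F0: "\<forall>x\<in>S. F x 0 = 1" and nu: "\<forall>x\<in>S. 0 < \<nu> x" and c: "c > 0"
    and g: "\<forall>i<n. g i = (\<Sum>x\<in>S. a x * F x i)"
  shows "2 * (\<Sum>i<n. g i * u i) - qf n (Xg S \<nu> F c) u \<le> (\<Sum>x\<in>S. (a x)\<^sup>2 / \<nu> x) + (\<Sum>x\<in>S. a x)\<^sup>2 / c"
proof -
  have Nc: "(\<Sum>x\<in>S. \<nu> x) + c > 0" using nu c by (simp add: add_nonneg_pos sum_nonneg less_imp_le)
  then have "(\<Sum>x\<in>S. \<nu> x) + c \<noteq> 0" by simp
  define \<alpha> where "\<alpha> = - (\<Sum>x\<in>S. \<nu> x * (\<Sum>i<n. F x i * u i)) / ((\<Sum>x\<in>S. \<nu> x) + c)"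
  define t where "t x = (\<Sum>i<n. F x i * u i)" for x
  note e = Xg_qf_opt[where S=S and n=n and F=F and \<nu>=\<nu> and c=c and v=u, OF fS n F0 \<open>(\<Sum>x\<in>S. \<nu> x) + c \<noteq> 0\<close>, folded \<alpha>_def]
  have gu: "(\<Sum>i<n. g i * u i) = (\<Sum>x\<in>S. a x * (t x + \<alpha>)) - \<alpha> * (\<Sum>x\<in>S. a x)"
  proof -
    have "(\<Sum>i<n. g i * u i) = (\<Sum>i<n. \<Sum>x\<in>S. a x * (F x i * u i))"
      using g by (auto simp: sum_distrib_right sum_distrib_left mult_ac intro!: sum.cong)
    also have "\<dots> = (\<Sum>x\<in>S. a x * t x)" unfolding t_def by (subst sum.swap) (simp add: sum_distrib_left)
    finally show ?thesis by (simp add: algebra_simps sum.distrib sum_distrib_left sum_distrib_right)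
  qed
  have "2 * (\<Sum>i<n. g i * u i) - qf n (Xg S \<nu> F c) u
      = (\<Sum>x\<in>S. 2 * a x * (t x + \<alpha>) - \<nu> x * (t x + \<alpha>)\<^sup>2) + (2 * (\<Sum>x\<in>S. a x) * (- \<alpha>) - c * (- \<alpha>)\<^sup>2)"
    unfolding e gu t_def[symmetric] by (simp add: sum_subtractf sum_distrib_left sum_distrib_right sum_negf algebra_simps)
  also have "\<dots> \<le> (\<Sum>x\<in>S. (a x)\<^sup>2 / \<nu> x) + (\<Sum>x\<in>S. a x)\<^sup>2 / c"
    using nu c by (intro add_mono sum_mono tau_aux) auto
  finally show ?thesis .
qed

lemma PEP:
  fixes P :: "real mat"
  assumes P: "P \<in> carrier_mat p p" and p: "p > 0"
  shows "P * mat p p (\<lambda>(i,j). unit_vec p 0 $ i * unit_vec p 0 $ j) * P = mat p p (\<lambda>(i,j). P $$ (i,0) * P $$ (0,j))"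
proof -
  have E: "mat p p (\<lambda>(i,j). unit_vec p 0 $ i * unit_vec p 0 $ j) = (mat p p (\<lambda>(i,j). if i = 0 \<and> j = 0 then 1 else 0) :: real mat)"
    by (rule eq_matI) auto
  have PE: "P * mat p p (\<lambda>(i,j). if i = 0 \<and> j = 0 then 1 else 0) = mat p p (\<lambda>(i,j). if j = 0 then P $$ (i,0) else 0)"
  proof (rule eq_matI)
    fix i j assume ij: "i < dim_row (mat p p (\<lambda>(i,j). if j = 0 then P $$ (i,0) else 0))" "j < dim_col (mat p p (\<lambda>(i,j). if j = 0 then P $$ (i,0) else 0))"
    then have i: "i < p" and j: "j < p" by auto
    have "(P * mat p p (\<lambda>(i,j). if i = 0 \<and> j = 0 then 1 else 0)) $$ (i,j) = (\<Sum>k\<in>{0..<p}. P $$ (i,k) * (if k = 0 \<and> j = 0 then 1 else 0))"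
      using P i j by (simp add: scalar_prod_def)
    also have "\<dots> = (\<Sum>k\<in>{0..<p}. if k = 0 then (if j = 0 then P $$ (i,0) else 0) else 0)"
      by (intro sum.cong) auto
    also have "\<dots> = (if j = 0 then P $$ (i,0) else 0)" using p by (simp add: sum.delta)
    finally show "(P * mat p p (\<lambda>(i,j). if i = 0 \<and> j = 0 then 1 else 0)) $$ (i,j) = mat p p (\<lambda>(i,j). if j = 0 then P $$ (i,0) else 0) $$ (i,j)"
      using i j by simp
  qed (use P in auto)
  have "mat p p (\<lambda>(i,j). if j = 0 then P $$ (i,0) else 0) * P = mat p p (\<lambda>(i,j). P $$ (i,0) * P $$ (0,j))"
  proof (rule eq_matI)
    fix i j assume ij: "i < dim_row (mat p p (\<lambda>(i,j). P $$ (i,0) * P $$ (0,j)))" "j < dim_col (mat p p (\<lambda>(i,j). P $$ (i,0) * P $$ (0,j)))"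
    then have i: "i < p" and j: "j < p" by auto
    have "(mat p p (\<lambda>(i,j). if j = 0 then P $$ (i,0) else 0) * P) $$ (i,j) = (\<Sum>k\<in>{0..<p}. (if k = 0 then P $$ (i,0) else 0) * P $$ (k,j))"
      using P i j by (simp add: scalar_prod_def)
    also have "\<dots> = (\<Sum>k\<in>{0..<p}. if k = 0 then P $$ (i,0) * P $$ (0,j) else 0)"
      by (intro sum.cong) auto
    also have "\<dots> = P $$ (i,0) * P $$ (0,j)" using p by (simp add: sum.delta)
    finally show "(mat p p (\<lambda>(i,j). if j = 0 then P $$ (i,0) else 0) * P) $$ (i,j) = mat p p (\<lambda>(i,j). P $$ (i,0) * P $$ (0,j)) $$ (i,j)"
      using i j by simp
  qed (use P in auto)
  then show ?thesis unfolding E PE by simp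
qed

lemma Mpg_eq:
  assumes p: "p > 0"
  shows "M_PG p a b m w \<beta> = (a / b) \<cdot>\<^sub>m fm p (Xg (supp w) (\<lambda>x. w x * exp (fvec x \<bullet> \<beta>)) (\<lambda>x j. fvec x $ j) (b / real m))"
proof -
  define P where "P = M_Po p w \<beta>"
  have Pc: "P \<in> carrier_mat p p" unfolding P_def M_Po_def by simp
  have Pij: "P $$ (i,j) = (\<Sum>x\<in>supp w. w x * exp (fvec x \<bullet> \<beta>) * fvec x $ i * fvec x $ j)" if "i < p" "j < p" for i j
    unfolding P_def M_Po_def using that by simp
  have e1: "unit_vec p 0 \<bullet> (P *\<^sub>v unit_vec p 0) = P $$ (0,0)"
  proof -
    have "unit_vec p 0 \<bullet> (P *\<^sub>v unit_vec p 0) = (P *\<^sub>v unit_vec p 0) $ 0"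
      using Pc p by (intro scalar_prod_left_unit) auto
    also have "\<dots> = row P 0 \<bullet> unit_vec p 0" using Pc p by simp
    also have "\<dots> = row P 0 $ 0" using Pc p by (intro scalar_prod_right_unit) auto
    also have "\<dots> = P $$ (0,0)" using Pc p by simp
    finally show ?thesis .
  qed
  show ?thesis
    unfolding M_PG_def Let_def P_def[symmetric] e1 PEP[OF Pc p]
  proof (rule eq_matI)
    fix i j assume "i < dim_row ((a / b) \<cdot>\<^sub>m fm p (Xg (supp w) (\<lambda>x. w x * exp (fvec x \<bullet> \<beta>)) (\<lambda>x j. fvec x $ j) (b / real m)))"
      "j < dim_col ((a / b) \<cdot>\<^sub>m fm p (Xg (supp w) (\<lambda>x. w x * exp (fvec x \<bullet> \<beta>)) (\<lambda>x j. fvec x $ j) (b / real m)))"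
    then have i: "i < p" and j: "j < p" by auto
    show "((a / b) \<cdot>\<^sub>m (P - 1 / (P $$ (0, 0) + b / real m) \<cdot>\<^sub>m mat p p (\<lambda>(i, j). P $$ (i, 0) * P $$ (0, j)))) $$ (i, j) =
         ((a / b) \<cdot>\<^sub>m fm p (Xg (supp w) (\<lambda>x. w x * exp (fvec x \<bullet> \<beta>)) (\<lambda>x j. fvec x $ j) (b / real m))) $$ (i, j)"
      using i j p Pc by (simp add: Pij Xg_def)
  qed (use Pc in auto)
qed

lemma det_Mpg:
  assumes p: "p > 0"
  shows "det (M_PG p a b m w \<beta>) = (a / b) ^ p * det (fm p (Xg (supp w) (\<lambda>x. w x * exp (fvec x \<bullet> \<beta>)) (\<lambda>x j. fvec x $ j) (b / real m)))"
  unfolding Mpg_eq[OF p] by simp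

lemma sq_expand: "(m::real) \<noteq> 0 \<Longrightarrow> s \<noteq> 0 \<Longrightarrow> (a - m / s)\<^sup>2 / m = a\<^sup>2 / m - 2 * a / s + m / s\<^sup>2"
  by (simp add: power2_eq_square field_simps)

lemma opt_generic:
  fixes S' :: "'a set" and \<nu>' w' lam :: "'a \<Rightarrow> real" and F' ax :: "'a \<Rightarrow> nat \<Rightarrow> real"
    and \<mu> :: "nat \<Rightarrow> real" and Fl :: "nat \<Rightarrow> nat \<Rightarrow> real"
  assumes n: "n > 0" and fS: "finite S'" and c: "c > 0"
    and F'0: "\<forall>x\<in>S'. F' x 0 = 1" and Fl0: "\<forall>l<n. Fl l 0 = 1"
    and mu: "\<forall>l<n. 0 < \<mu> l"
    and span: "\<And>v. (\<forall>l\<in>{..<n}. (\<Sum>i<n. Fl l i * v i) = 0) \<Longrightarrow> \<forall>i<n. v i = 0"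
    and nu': "\<forall>x\<in>S'. \<nu>' x = w' x * lam x" and w'0: "\<forall>x\<in>S'. 0 \<le> w' x" and lam0: "\<forall>x\<in>S'. 0 < lam x"
    and w'1: "(\<Sum>x\<in>S'. w' x) = 1"
    and coef: "\<forall>x\<in>S'. \<forall>i<n. F' x i = (\<Sum>l<n. ax x l * Fl l i)"
    and sumax: "\<forall>x\<in>S'. (\<Sum>l<n. ax x l) = 1"
    and sens: "\<forall>x\<in>S'. lam x * ((\<Sum>l<n. (ax x l)\<^sup>2 / \<mu> l) - 1 / ((\<Sum>l<n. \<mu> l) + c)) + (\<Sum>l<n. \<mu> l) / ((\<Sum>l<n. \<mu> l) + c) \<le> real n"
  shows "det (fm n (Xg S' \<nu>' F' c)) \<le> det (fm n (Xg {..<n} \<mu> Fl c)) \<and> 0 < det (fm n (Xg {..<n} \<mu> Fl c))"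
proof -
  define N where "N = (\<Sum>l<n. \<mu> l)"
  define s where "s = N + c"
  have N0: "N > 0" unfolding N_def using mu n by (intro sum_pos) auto
  have s0: "s > 0" unfolding s_def using N0 c by simp
  define kv where "kv i = (\<Sum>l<n. (\<mu> l / s) * Fl l i)" for i
  define gK where "gK k = (case k of None \<Rightarrow> kv | Some x \<Rightarrow> (\<lambda>i. F' x i - kv i))" for k
  define \<nu>K where "\<nu>K k = (case k of None \<Rightarrow> c | Some x \<Rightarrow> \<nu>' x)" for k
  define aK where "aK k = (case k of None \<Rightarrow> (\<lambda>l. \<mu> l / s) | Some x \<Rightarrow> (\<lambda>l. ax x l - \<mu> l / s))" for k
  define \<tau>K where "\<tau>K k = (\<Sum>l<n. (aK k l)\<^sup>2 / \<mu> l) + (\<Sum>l<n. aK k l)\<^sup>2 / c" for k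
  define K where "K = insert None (Some ` S')"
  have fK: "finite K" unfolding K_def using fS by simp
  have nu'0: "\<forall>x\<in>S'. 0 \<le> \<nu>' x" using nu' w'0 lam0 by (simp add: less_imp_le)
  have sumK: "(\<Sum>k\<in>K. f k) = f None + (\<Sum>x\<in>S'. f (Some x))" for f :: "'a option \<Rightarrow> real"
    unfolding K_def using fS by (simp add: sum.reindex)
  have sX: "symm n (Xg S' \<nu>' F' c)" by (rule Xg_symm)
  have pX: "psd n (Xg S' \<nu>' F' c)" by (rule Xg_psd[where S=S' and F=F' and \<nu>=\<nu>' and c=c and n=n, OF fS n F'0 nu'0 c])
  have sY: "symm n (Xg {..<n} \<mu> Fl c)" by (rule Xg_symm)
  have pY: "pd n (Xg {..<n} \<mu> Fl c)"
    by (rule Xg_pd) (use n c Fl0 mu span in auto)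
  have nuK: "\<forall>k\<in>K. 0 \<le> \<nu>K k" unfolding K_def \<nu>K_def using c nu'0 by auto
  have bnd: "\<forall>v. qf n (Xg S' \<nu>' F' c) v \<le> (\<Sum>k\<in>K. \<nu>K k * (\<Sum>i<n. gK k i * v i)\<^sup>2)"
  proof
    fix v
    define \<alpha> where "\<alpha> = - (\<Sum>i<n. kv i * v i)"
    have pos: "(\<Sum>x\<in>S'. \<nu>' x) + c > 0" using nu'0 c by (simp add: add_nonneg_pos sum_nonneg)
    have "qf n (Xg S' \<nu>' F' c) v \<le> (\<Sum>x\<in>S'. \<nu>' x * ((\<Sum>i<n. F' x i * v i) + \<alpha>)\<^sup>2) + c * \<alpha>\<^sup>2"
      by (rule Xg_bound[where S=S' and F=F' and \<nu>=\<nu>' and c=c and n=n and v=v and \<alpha>=\<alpha>, OF fS n F'0 pos])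
    also have "\<dots> = (\<Sum>k\<in>K. \<nu>K k * (\<Sum>i<n. gK k i * v i)\<^sup>2)"
    proof -
      have a: "(\<Sum>i<n. (F' x i - kv i) * v i) = (\<Sum>i<n. F' x i * v i) + \<alpha>" for x
        unfolding \<alpha>_def by (simp add: left_diff_distrib sum_subtractf)
      have b: "(\<Sum>i<n. kv i * v i)\<^sup>2 = \<alpha>\<^sup>2" unfolding \<alpha>_def by simp
      show ?thesis unfolding sumK \<nu>K_def gK_def using a b by simp
    qed
    finally show "qf n (Xg S' \<nu>' F' c) v \<le> (\<Sum>k\<in>K. \<nu>K k * (\<Sum>i<n. gK k i * v i)\<^sup>2)" .
  qed
  have tau: "\<forall>k\<in>K. \<forall>u. 2 * (\<Sum>i<n. gK k i * u i) - qf n (Xg {..<n} \<mu> Fl c) u \<le> \<tau>K k"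
  proof (intro ballI allI)
    fix k u assume k: "k \<in> K"
    have g: "\<forall>i<n. gK k i = (\<Sum>l\<in>{..<n}. aK k l * Fl l i)"
    proof (cases k)
      case None then show ?thesis unfolding gK_def aK_def kv_def by simp
    next
      case (Some x)
      then have x: "x \<in> S'" using k unfolding K_def by auto
      show ?thesis unfolding gK_def aK_def kv_def Some
        using coef x by (simp add: left_diff_distrib sum_subtractf)
    qed
    show "2 * (\<Sum>i<n. gK k i * u i) - qf n (Xg {..<n} \<mu> Fl c) u \<le> \<tau>K k"
      unfolding \<tau>K_def by (rule Xg_tau[OF _ n _ _ c g]) (use Fl0 mu in auto)
  qed
  have tauN: "c * \<tau>K None = N / s"
  proof -
    have "(\<Sum>l<n. (\<mu> l / s)\<^sup>2 / \<mu> l) = N / s\<^sup>2"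
      unfolding N_def sum_divide_distrib using mu by (intro sum.cong refl) (simp add: power2_eq_square)
    moreover have "(\<Sum>l<n. \<mu> l / s) = N / s" unfolding N_def by (simp add: sum_divide_distrib)
    ultimately have "\<tau>K None = N / s\<^sup>2 + (N / s)\<^sup>2 / c" unfolding \<tau>K_def aK_def by simp
    then have "c * \<tau>K None = c * (N / s\<^sup>2) + c * ((N / s)\<^sup>2 / c)" by (simp add: distrib_left)
    also have "\<dots> = c * N / s\<^sup>2 + N\<^sup>2 / s\<^sup>2" using c by (simp add: power_divide)
    also have "\<dots> = (c * N + N\<^sup>2) / s\<^sup>2" by (simp add: add_divide_distrib)
    also have "\<dots> = N * (c + N) / s\<^sup>2" by (simp add: power2_eq_square algebra_simps)
    also have "c + N = s" unfolding s_def by simp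
    also have "N * s / s\<^sup>2 = N / s" using s0 by (simp add: power2_eq_square)
    finally show ?thesis .
  qed
  have tauS: "\<tau>K (Some x) = (\<Sum>l<n. (ax x l)\<^sup>2 / \<mu> l) - 1 / s" if x: "x \<in> S'" for x
  proof -
    have "(\<Sum>l<n. (ax x l - \<mu> l / s)\<^sup>2 / \<mu> l) = (\<Sum>l<n. (ax x l)\<^sup>2 / \<mu> l - 2 * ax x l / s + \<mu> l / s\<^sup>2)"
      using mu s0 by (intro sum.cong refl sq_expand) auto
    also have "\<dots> = (\<Sum>l<n. (ax x l)\<^sup>2 / \<mu> l) - 2 / s + N / s\<^sup>2"
      using sumax x unfolding N_def by (simp add: sum.distrib sum_subtractf sum_divide_distrib[symmetric] sum_distrib_left[symmetric])
    finally have A: "(\<Sum>l<n. (ax x l - \<mu> l / s)\<^sup>2 / \<mu> l) = (\<Sum>l<n. (ax x l)\<^sup>2 / \<mu> l) - 2 / s + N / s\<^sup>2" .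
    have B: "(\<Sum>l<n. ax x l - \<mu> l / s) = 1 - N / s"
      using sumax x unfolding N_def by (simp add: sum_subtractf sum_divide_distrib)
    have C: "- 2 / s + N / s\<^sup>2 + (1 - N / s)\<^sup>2 / c = - 1 / s"
    proof -
      have "1 - N / s = c / s" unfolding s_def using s0 unfolding s_def by (simp add: field_simps)
      then have "(1 - N / s)\<^sup>2 / c = c / s\<^sup>2" using c by (simp add: power2_eq_square)
      moreover have "N / s\<^sup>2 + c / s\<^sup>2 = 1 / s"
      proof -
        have "N / s\<^sup>2 + c / s\<^sup>2 = (N + c) / s\<^sup>2" by (simp add: add_divide_distrib)
        also have "N + c = s" unfolding s_def ..
        also have "s / s\<^sup>2 = 1 / s" using s0 by (simp add: power2_eq_square)
        finally show ?thesis .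
      qed
      ultimately show ?thesis by simp
    qed
    show ?thesis unfolding \<tau>K_def aK_def using A B C by simp
  qed
  have st: "(\<Sum>k\<in>K. \<nu>K k * \<tau>K k) \<le> real n"
  proof -
    have "(\<Sum>x\<in>S'. \<nu>K (Some x) * \<tau>K (Some x)) \<le> (\<Sum>x\<in>S'. w' x * (real n - N / s))"
    proof (rule sum_mono)
      fix x assume x: "x \<in> S'"
      have "lam x * \<tau>K (Some x) \<le> real n - N / s"
        using sens x unfolding tauS[OF x] N_def[symmetric] s_def[symmetric] by auto
      then have "w' x * (lam x * \<tau>K (Some x)) \<le> w' x * (real n - N / s)"
        using w'0 x by (intro mult_left_mono) auto
      then show "\<nu>K (Some x) * \<tau>K (Some x) \<le> w' x * (real n - N / s)"
        unfolding \<nu>K_def using nu' x by (simp add: mult.assoc)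
    qed
    also have "\<dots> = real n - N / s" using w'1 by (simp add: sum_distrib_right[symmetric])
    finally have "(\<Sum>x\<in>S'. \<nu>K (Some x) * \<tau>K (Some x)) \<le> real n - N / s" .
    moreover have "\<nu>K None * \<tau>K None = N / s" unfolding \<nu>K_def using tauN by simp
    ultimately show ?thesis unfolding sumK by simp
  qed
  show ?thesis by (rule GL[OF sX pX sY pY fK nuK bnd tau st])
qed

lemma fvec_index: "dim_vec x = q \<Longrightarrow> j < Suc q \<Longrightarrow> fvec x $ j = (if j = 0 then 1 else x $ (j - 1))"
  unfolding fvec_def by (simp add: vec_index_vCons)

lemma fvec_dim[simp]: "dim_vec (fvec x) = Suc (dim_vec x)" unfolding fvec_def by simp

lemma fvec_dot:
  assumes "dim_vec x = q" "dim_vec \<beta> = Suc q"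
  shows "fvec x \<bullet> \<beta> = \<beta> $ 0 + (\<Sum>i<q. x $ i * \<beta> $ (Suc i))"
proof -
  have "fvec x \<bullet> \<beta> = (\<Sum>j<Suc q. fvec x $ j * \<beta> $ j)"
    unfolding scalar_prod_def using assms by (simp add: atLeast0LessThan)
  also have "\<dots> = fvec x $ 0 * \<beta> $ 0 + (\<Sum>i<q. fvec x $ Suc i * \<beta> $ Suc i)"
    by (rule sum.lessThan_Suc_shift)
  also have "\<dots> = \<beta> $ 0 + (\<Sum>i<q. x $ i * \<beta> $ (Suc i))"
    using assms by (simp add: fvec_index)
  finally show ?thesis .
qed

lemma Xg_reindex:
  assumes "inj_on f A"
  shows "Xg (f ` A) \<nu> F c = Xg A (\<lambda>l. \<nu> (f l)) (\<lambda>l. F (f l)) c"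
  unfolding Xg_def[abs_def] using assms by (simp add: sum.reindex)

lemma sumsq_le_sqsum:
  fixes y :: "nat \<Rightarrow> real"
  assumes "finite A" "\<forall>i\<in>A. y i \<le> 0"
  shows "(\<Sum>i\<in>A. (y i)\<^sup>2) \<le> (\<Sum>i\<in>A. y i)\<^sup>2"
  using assms
proof (induction A rule: finite_induct)
  case empty then show ?case by simp
next
  case (insert a A)
  have IH: "(\<Sum>i\<in>A. (y i)\<^sup>2) \<le> (\<Sum>i\<in>A. y i)\<^sup>2" using insert by simp
  have ya: "y a \<le> 0" using insert by simp
  have sA: "(\<Sum>i\<in>A. y i) \<le> 0" using insert by (intro sum_nonpos) simp
  have "0 \<le> y a * (\<Sum>i\<in>A. y i)" using ya sA by (simp add: mult_nonpos_nonpos)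
  then show ?case using insert IH by (simp add: power2_eq_square algebra_simps)
qed

lemma sens1D:
  fixes z K0 K1 D C' T :: real
  assumes z: "z > 0" and K0: "K0 > 0" and K1: "K1 > 0"
    and h0: "exp (-0) * (K0 * (1 - 0/z)\<^sup>2 + K1 * 0\<^sup>2 / z\<^sup>2 - D) + C' = T"
    and hz: "exp (-z) * (K0 * (1 - z/z)\<^sup>2 + K1 * z\<^sup>2 / z\<^sup>2 - D) + C' = T"
    and hR: "2 * K1 / z - K1 + D = 0"
    and u: "u \<ge> 0"
  shows "exp (-u) * (K0 * (1 - u/z)\<^sup>2 + K1 * u\<^sup>2 / z\<^sup>2 - D) + C' \<le> T"
proof -
  define h where "h = (\<lambda>u. exp (-u) * (K0 * (1 - u/z)\<^sup>2 + K1 * u\<^sup>2 / z\<^sup>2 - D) + C')"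
  define A where "A = (K0 + K1) / z\<^sup>2"
  define B where "B = 2 * K0 / z + 2 * (K0 + K1) / z\<^sup>2"
  have Apos: "A > 0" unfolding A_def using K0 K1 z by simp
  have zne: "z \<noteq> 0" using z by simp
  have D: "D = K1 - 2 * K1 / z" using hR by simp
  have der: "(h has_real_derivative exp (-t) * ((t - z) * (B - A * (t + z)))) (at t)" for t
    unfolding h_def
    apply (rule derivative_eq_intros refl | (simp add: zne; fail))+
    unfolding D A_def B_def using z
    apply (simp add: field_simps power2_eq_square)
    done
  have hz': "h z = T" using hz unfolding h_def .
  have h0': "h 0 = T" using h0 unfolding h_def .
  have LZ: "B - A * (z + z) \<le> 0"
  proof (rule ccontr)
    assume "\<not> ?thesis"
    then have Lp: "B - A * (z + z) > 0" by simp
    have L_pos: "B - A * (t + z) > 0" if "t \<le> z" for t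
    proof -
      have "A * (t + z) \<le> A * (z + z)" using that Apos by (intro mult_left_mono) auto
      then show ?thesis using Lp by linarith
    qed
    have "h (z/2) < h 0"
    proof (rule DERIV_neg_imp_decreasing[of 0 "z/2" h])
      show "0 < z/2" using z by simp
      fix t assume t: "0 \<le> t" "t \<le> z/2"
      have "(t - z) * (B - A * (t + z)) < 0"
        using L_pos[of t] t z by (intro mult_neg_pos) auto
      then show "\<exists>y. DERIV h t :> y \<and> y < 0"
        using der[of t] by (intro exI[of _ "exp (-t) * ((t - z) * (B - A * (t + z)))"]) (simp add: mult_pos_neg)
    qed
    moreover have "h z \<le> h (z/2)"
    proof (rule DERIV_nonpos_imp_nonincreasing[of "z/2" z h])
      show "z/2 \<le> z" using z by simp
      fix t assume t: "z/2 \<le> t" "t \<le> z"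
      have "(t - z) * (B - A * (t + z)) \<le> 0"
        using L_pos[of t] t z by (intro mult_nonpos_nonneg) auto
      then show "\<exists>y. DERIV h t :> y \<and> y \<le> 0"
        using der[of t] by (intro exI[of _ "exp (-t) * ((t - z) * (B - A * (t + z)))"]) (simp add: mult_nonneg_nonpos)
    qed
    ultimately show False using h0' hz' by simp
  qed
  have "h u \<le> T"
  proof (cases "u \<ge> z")
    case True
    have "h u \<le> h z"
    proof (rule DERIV_nonpos_imp_nonincreasing[of z u h, OF True])
      fix t assume t: "z \<le> t" "t \<le> u"
      have "A * (z + z) \<le> A * (t + z)" using t Apos by (intro mult_left_mono) auto
      then have "(t - z) * (B - A * (t + z)) \<le> 0"
        using LZ t by (intro mult_nonneg_nonpos) auto
      then show "\<exists>y. DERIV h t :> y \<and> y \<le> 0"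
        using der[of t] by (intro exI[of _ "exp (-t) * ((t - z) * (B - A * (t + z)))"]) (simp add: mult_nonneg_nonpos)
    qed
    then show ?thesis using hz' by simp
  next
    case False
    show ?thesis
    proof (cases "B - A * (u + z) \<ge> 0")
      case Lu: True
      have "h u \<le> h 0"
      proof (rule DERIV_nonpos_imp_nonincreasing[of 0 u h, OF u])
        fix t assume t: "0 \<le> t" "t \<le> u"
        have "A * (t + z) \<le> A * (u + z)" using t Apos by (intro mult_left_mono) auto
        then have "(t - z) * (B - A * (t + z)) \<le> 0"
          using Lu t False by (intro mult_nonpos_nonneg) auto
        then show "\<exists>y. DERIV h t :> y \<and> y \<le> 0"
          using der[of t] by (intro exI[of _ "exp (-t) * ((t - z) * (B - A * (t + z)))"]) (simp add: mult_nonneg_nonpos)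
      qed
      then show ?thesis using h0' by simp
    next
      case Lu: False
      have "h u \<le> h z"
      proof (rule DERIV_nonneg_imp_nondecreasing[of u z h])
        show "u \<le> z" using False by simp
        fix t assume t: "u \<le> t" "t \<le> z"
        have "A * (u + z) \<le> A * (t + z)" using t Apos by (intro mult_left_mono) auto
        then have "0 \<le> (t - z) * (B - A * (t + z))"
          using Lu t by (intro mult_nonpos_nonpos) auto
        then show "\<exists>y. DERIV h t :> y \<and> y \<ge> 0"
          using der[of t] by (intro exI[of _ "exp (-t) * ((t - z) * (B - A * (t + z)))"]) simp
      qed
      then show ?thesis using hz' by simp
    qed
  qed
  then show ?thesis unfolding h_def .
qed

locale wpl =
  fixes P mm b t :: real and wp w1 g :: "real \<Rightarrow> real"
  assumes P: "P \<ge> 2" and mm: "mm > 0" and b: "b > 0"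
    and wp_def: "wp = (\<lambda>z. 2 / (P + sqrt ((P - 2)\<^sup>2 + 4 * (P - 1) *
              ((1 + mm / b * exp t) / (1 + mm / b * exp (t - z))))))"
    and w1_def: "w1 = (\<lambda>z. (1 - wp z) / (P - 1))"
    and g_def: "g = (\<lambda>z. mm * ((P - 1) * w1 z * exp (t - z) + wp z * exp t)
                  * (z * (P - 1) * w1 z - 2) + b * (z * P * w1 z - 2))"
begin

definition rr where "rr z = (1 + mm / b * exp t) / (1 + mm / b * exp (t - z))"
definition Nf where "Nf z = (P - 1) * w1 z * exp (t - z) + wp z * exp t"

lemma rr_pos: "rr z > 0" unfolding rr_def using mm b by (intro divide_pos_pos add_pos_pos) auto

lemma rr_gt1: "z > 0 \<Longrightarrow> rr z > 1"
proof -
  assume z: "z > 0"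
  have d: "0 < 1 + mm / b * exp (t - z)" using mm b by (intro add_pos_pos) auto
  have "exp (t - z) < exp t" using z by simp
  then have "mm / b * exp (t - z) < mm / b * exp t" using mm b by (intro mult_strict_left_mono) auto
  then have "1 + mm / b * exp (t - z) < 1 + mm / b * exp t" by simp
  then show ?thesis unfolding rr_def using d by (simp add: less_divide_eq_1_pos)
qed

lemma rr_mono: "z1 < z2 \<Longrightarrow> rr z1 < rr z2"
proof -
  assume z: "z1 < z2"
  have "exp (t - z2) < exp (t - z1)" using z by simp
  then have "mm / b * exp (t - z2) < mm / b * exp (t - z1)" using mm b by (intro mult_strict_left_mono) auto
  then show ?thesis unfolding rr_def using mm b
    by (intro divide_strict_left_mono) (auto intro!: add_pos_pos mult_pos_pos)
qed

lemma wp_eq: "wp z = 2 / (P + sqrt ((P - 2)\<^sup>2 + 4 * (P - 1) * rr z))"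
  unfolding wp_def rr_def by simp

lemma sq_gt: "z > 0 \<Longrightarrow> sqrt ((P - 2)\<^sup>2 + 4 * (P - 1) * rr z) > P"
proof -
  assume z: "z > 0"
  have "(P - 2)\<^sup>2 + 4 * (P - 1) * 1 < (P - 2)\<^sup>2 + 4 * (P - 1) * rr z"
    using rr_gt1[OF z] P by (intro add_strict_left_mono mult_strict_left_mono) auto
  moreover have "(P - 2)\<^sup>2 + 4 * (P - 1) * 1 = P\<^sup>2" by (simp add: power2_eq_square algebra_simps)
  ultimately have "sqrt (P\<^sup>2) < sqrt ((P - 2)\<^sup>2 + 4 * (P - 1) * rr z)"
    by (intro real_sqrt_less_mono) simp
  moreover have "sqrt (P\<^sup>2) = P" using P by simp
  ultimately show ?thesis by simp
qed

lemma sq_nonneg: "0 \<le> (P - 2)\<^sup>2 + 4 * (P - 1) * rr z"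
  using P rr_pos[of z] by (intro add_nonneg_nonneg) auto

lemma den_pos: "P + sqrt ((P - 2)\<^sup>2 + 4 * (P - 1) * rr z) > 0"
  using P sq_nonneg[of z] by (intro add_pos_nonneg) auto

lemma wp_pos: "wp z > 0"
  unfolding wp_eq using den_pos[of z] by (intro divide_pos_pos) auto

lemma wp_lt: "z > 0 \<Longrightarrow> wp z < 1 / P"
proof -
  assume z: "z > 0"
  have "2 / (P + sqrt ((P - 2)\<^sup>2 + 4 * (P - 1) * rr z)) < 2 / (P + P)"
    using sq_gt[OF z] P by (intro divide_strict_left_mono) auto
  then show ?thesis unfolding wp_eq using P by simp
qed

lemma wp_anti: "z1 < z2 \<Longrightarrow> wp z2 \<le> wp z1"
proof -
  assume z: "z1 < z2"
  have "sqrt ((P - 2)\<^sup>2 + 4 * (P - 1) * rr z1) \<le> sqrt ((P - 2)\<^sup>2 + 4 * (P - 1) * rr z2)"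
    using rr_mono[OF z] P by (intro real_sqrt_le_mono add_left_mono mult_left_mono) auto
  then show ?thesis unfolding wp_eq using den_pos[of z1] den_pos[of z2]
    by (intro divide_left_mono) (auto intro!: mult_pos_pos)
qed

lemma wp_lt1: "z > 0 \<Longrightarrow> wp z < 1"
proof -
  assume z: "z > 0"
  have "1 / P \<le> 1" using P by simp
  then show ?thesis using wp_lt[OF z] by linarith
qed

lemma w1_pos: "z > 0 \<Longrightarrow> w1 z > 0"
  unfolding w1_def using wp_lt1[of z] P by (auto intro!: divide_pos_pos)

lemma w1_gt: "z > 0 \<Longrightarrow> w1 z > 1 / P"
proof -
  assume z: "z > 0"
  have "1 - 1/P < 1 - wp z" using wp_lt[OF z] by simp
  then have "(1 - 1/P) / (P - 1) < (1 - wp z) / (P - 1)" using P by (intro divide_strict_right_mono) auto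
  moreover have "(1 - 1/P) / (P - 1) = 1 / P" using P by (simp add: field_simps)
  ultimately show ?thesis unfolding w1_def by simp
qed

lemma w1_le: "w1 z \<le> 1 / (P - 1)"
  unfolding w1_def using wp_pos[of z] P by (intro divide_right_mono) auto

lemma w1_mono: "z1 < z2 \<Longrightarrow> w1 z1 \<le> w1 z2"
  unfolding w1_def using wp_anti[of z1 z2] P by (intro divide_right_mono) auto

lemma Nf_eq: "Nf z = exp t * (1 - (1 - wp z) * (1 - exp (-z)))"
  unfolding Nf_def using P by (simp add: w1_def exp_diff exp_minus field_simps)

lemma Nf_pos: "z > 0 \<Longrightarrow> Nf z > 0"
  unfolding Nf_def using w1_pos[of z] wp_pos[of z] P by (intro add_pos_pos mult_pos_pos) auto

lemma Nf_anti: "0 < z1 \<Longrightarrow> z1 < z2 \<Longrightarrow> Nf z2 \<le> Nf z1"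
proof -
  assume z: "0 < z1" "z1 < z2"
  have a: "0 \<le> 1 - wp z1" using wp_lt1[of z1] z by simp
  have b1: "0 \<le> 1 - exp (-z1)" using z by simp
  have "(1 - wp z1) * (1 - exp (-z1)) \<le> (1 - wp z2) * (1 - exp (-z2))"
    using wp_anti[OF z(2)] z a b1 by (intro mult_mono) auto
  then show ?thesis unfolding Nf_eq by (intro mult_left_mono) auto
qed

definition H where "H z = z * w1 z * (P - 1 + b / (mm * Nf z + b)) - 2"

lemma g_H: "g z = (mm * Nf z + b) * H z" if "z > 0"
proof -
  have pos: "mm * Nf z + b > 0" using Nf_pos[OF that] mm b by (intro add_pos_pos mult_pos_pos) auto
  have e: "(mm * Nf z + b) * H z = (mm * Nf z + b) * (z * w1 z * (P - 1)) + z * w1 z * b - 2 * (mm * Nf z + b)"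
    unfolding H_def using pos by (simp add: field_simps)
  have "g z = mm * Nf z * (z * (P - 1) * w1 z - 2) + b * (z * P * w1 z - 2)"
    unfolding Nf_def by (simp add: g_def)
  then show ?thesis unfolding e by (simp add: algebra_simps)
qed

lemma H_mono: "0 < z1 \<Longrightarrow> z1 < z2 \<Longrightarrow> H z1 < H z2"
proof -
  assume z: "0 < z1" "z1 < z2"
  have z2: "0 < z2" using z by simp
  define F where "F z = P - 1 + b / (mm * Nf z + b)" for z
  have Fpos: "F z > 0" if "z > 0" for z
    unfolding F_def using P b mm Nf_pos[OF that] by (intro add_pos_nonneg) auto
  have Fmono: "F z1 \<le> F z2"
  proof -
    have "mm * Nf z2 + b \<le> mm * Nf z1 + b" using Nf_anti[OF z] mm by simp
    then have "b / (mm * Nf z1 + b) \<le> b / (mm * Nf z2 + b)"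
      using b mm Nf_pos[OF z2] by (intro divide_left_mono) (auto intro!: mult_pos_pos add_pos_pos)
    then show ?thesis unfolding F_def by simp
  qed
  have "z1 * (w1 z1 * F z1) < z2 * (w1 z1 * F z1)"
    using z w1_pos[OF z(1)] Fpos[OF z(1)] by (intro mult_strict_right_mono) auto
  also have "\<dots> \<le> z2 * (w1 z2 * F z2)"
    using z2 w1_pos[OF z(1)] Fpos[OF z(1)] w1_mono[OF z(2)] Fmono
    by (intro mult_left_mono mult_mono) auto
  finally show ?thesis unfolding H_def F_def[symmetric] by (simp add: mult.assoc)
qed

lemma g_cont: "continuous_on S g"
proof -
  have d1: "1 + mm / b * exp (t - z) \<noteq> 0" for z
  proof -
    have "0 < 1 + mm / b * exp (t - z)" using mm b by (intro add_pos_pos mult_pos_pos) auto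
    then show ?thesis by simp
  qed
  have d2: "P + sqrt ((P - 2)\<^sup>2 + 4 * (P - 1) * ((1 + mm / b * exp t) / (1 + mm / b * exp (t - z)))) \<noteq> 0" for z
    using den_pos[of z] unfolding rr_def by simp
  have d3: "P - 1 \<noteq> 0" using P by simp
  show ?thesis unfolding g_def w1_def wp_def
    by (intro continuous_intros) (auto simp only: d1 d2 d3 not_False_eq_True)
qed

lemma g_unique: "\<exists>!z. z > 0 \<and> g z = 0"
proof -
  have Hup: "H z \<le> z * (1 / (P - 1)) * P - 2" if z: "z > 0" for z
  proof -
    have F: "P - 1 + b / (mm * Nf z + b) \<le> P"
    proof -
      have pos: "0 < mm * Nf z + b" using b mm Nf_pos[OF z] by (intro add_pos_pos mult_pos_pos) auto
      have nn: "0 \<le> mm * Nf z" using mm Nf_pos[OF z] by simp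
      have "b / (mm * Nf z + b) \<le> 1" using pos nn by (simp add: divide_le_eq_1)
      then show ?thesis by simp
    qed
    have "z * w1 z * (P - 1 + b / (mm * Nf z + b)) \<le> z * (1 / (P - 1)) * P"
      using z w1_le[of z] w1_pos[OF z] F P b mm Nf_pos[OF z]
      by (intro mult_mono mult_left_mono) (auto intro!: add_nonneg_nonneg)
    then show ?thesis unfolding H_def by simp
  qed
  have Hlow: "z * (1 / P) * (P - 1) - 2 < H z" if z: "z > 0" for z
  proof -
    have F: "P - 1 \<le> P - 1 + b / (mm * Nf z + b)" using b mm Nf_pos[OF z] by simp
    have "(1 / P) * (P - 1) < w1 z * (P - 1)" using w1_gt[OF z] P by (intro mult_strict_right_mono) auto
    also have "\<dots> \<le> w1 z * (P - 1 + b / (mm * Nf z + b))" using F w1_pos[OF z] by (intro mult_left_mono) auto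
    finally have "z * ((1 / P) * (P - 1)) < z * (w1 z * (P - 1 + b / (mm * Nf z + b)))"
      using z by (intro mult_strict_left_mono) auto
    then have "z * (1 / P) * (P - 1) < z * w1 z * (P - 1 + b / (mm * Nf z + b))" by (simp add: mult.assoc)
    then show ?thesis unfolding H_def by simp
  qed
  have Pm: "P - 1 > 0" using P by simp
  have a: "H (1/2) < 0"
  proof -
    have "(1/2) * (1 / (P - 1)) * P - 2 < 0" using P by (simp add: field_simps)
    then show ?thesis using Hup[of "1/2"] by simp
  qed
  have bb: "0 < H (2 * P + 1)"
  proof -
    have "0 \<le> (2 * P + 1) * (1 / P) * (P - 1) - 2"
    proof -
      have h: "0 \<le> (P - 2) * (2 * P + 1)" using P by simp
      have "(2 * P + 1) * (P - 1) - 2 * P = (P - 2) * (2 * P + 1) + 1" by (simp add: algebra_simps)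
      then have "2 * P \<le> (2 * P + 1) * (P - 1)" using h by linarith
      then show ?thesis using P by (simp add: field_simps)
    qed
    then show ?thesis using Hlow[of "2 * P + 1"] P by simp
  qed
  have gpos: "mm * Nf z + b > 0" if "z > 0" for z using Nf_pos[OF that] mm b by (intro add_pos_pos mult_pos_pos) auto
  have g0: "g z = 0 \<longleftrightarrow> H z = 0" if "z > 0" for z using g_H[OF that] gpos[OF that] by simp
  have "\<exists>x. 1/2 \<le> x \<and> x \<le> 2 * P + 1 \<and> g x = 0"
  proof (rule IVT')
    show "g (1/2) \<le> 0" using g_H[of "1/2"] gpos[of "1/2"] a by (simp add: mult_pos_neg less_imp_le)
    show "0 \<le> g (2 * P + 1)" using g_H[of "2 * P + 1"] gpos[of "2 * P + 1"] bb P by simp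
    show "1/2 \<le> 2 * P + 1" using P by simp
    show "continuous_on {1/2..2 * P + 1} g" by (rule g_cont)
  qed
  then obtain z0 where z0: "z0 > 0" "g z0 = 0" by force
  show ?thesis
  proof (rule ex1I[of _ z0])
    show "z0 > 0 \<and> g z0 = 0" using z0 by simp
    fix y assume y: "y > 0 \<and> g y = 0"
    show "y = z0"
    proof (rule ccontr)
      assume ne: "y \<noteq> z0"
      have Hy: "H y = 0" using g0 y by blast
      have Hz: "H z0 = 0" using g0 z0 by blast
      show False
      proof (cases "y < z0")
        case True then show ?thesis using H_mono[of y z0] Hy Hz y by simp
      next
        case False then show ?thesis using H_mono[of z0 y] Hy Hz z0 ne by simp
      qed
    qed
  qed
qed

lemma EqA:
  assumes z: "z > 0"
  shows "1 / wp z - exp t / (Nf z + b / mm) + Nf z / (Nf z + b / mm) = P"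
proof -
  define w where "w = wp z"
  define E where "E = exp t"
  define \<rho> where "\<rho> = exp (-z)"
  define c where "c = b / mm"
  define U where "U = E * \<rho> + c"
  define V where "V = E * (1 - \<rho>)"
  define sq where "sq = sqrt ((P - 2)\<^sup>2 + 4 * (P - 1) * rr z)"
  have Epos: "E > 0" unfolding E_def by simp
  have cpos: "c > 0" unfolding c_def using b mm by simp
  have rpos: "\<rho> > 0" unfolding \<rho>_def by simp
  have Upos: "U > 0" unfolding U_def using Epos cpos rpos by (intro add_pos_pos mult_pos_pos)
  have sq2: "sq\<^sup>2 = (P - 2)\<^sup>2 + 4 * (P - 1) * rr z" unfolding sq_def using sq_nonneg[of z] by simp
  have dn: "P + sq > 0" unfolding sq_def by (rule den_pos)
  have wsq: "w * (P + sq) = 2" unfolding w_def wp_eq sq_def[symmetric] using dn by (simp add: field_simps)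
  have rr_UV: "rr z = (U + V) / U"
  proof -
    have "rr z = (1 + E / c) / (1 + E * \<rho> / c)"
      unfolding rr_def E_def \<rho>_def c_def using mm b by (simp add: exp_diff exp_minus field_simps)
    also have "\<dots> = ((U + V) / c) / (U / c)"
    proof -
      have "1 + E / c = (U + V) / c" unfolding U_def V_def using cpos by (simp add: field_simps)
      moreover have "1 + E * \<rho> / c = U / c" unfolding U_def using cpos by (simp add: field_simps)
      ultimately show ?thesis by simp
    qed
    also have "\<dots> = (U + V) / U" using cpos by simp
    finally show ?thesis .
  qed
  have e1: "(w * sq)\<^sup>2 = (2 - P * w)\<^sup>2"
  proof -
    have "w * sq = 2 - P * w" using wsq by (simp add: algebra_simps)
    then show ?thesis by simp
  qed
  have e2: "U * (2 - P * w)\<^sup>2 = w\<^sup>2 * (U * (P - 2)\<^sup>2 + 4 * (P - 1) * (U + V))"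
  proof -
    have "U * (2 - P * w)\<^sup>2 = U * (w\<^sup>2 * sq\<^sup>2)" using e1 by (simp add: power_mult_distrib)
    also have "\<dots> = w\<^sup>2 * (U * (P - 2)\<^sup>2 + 4 * (P - 1) * (U + V))"
      unfolding sq2 rr_UV using Upos by (simp add: field_simps)
    finally show ?thesis .
  qed
  have quad: "U - P * U * w - (P - 1) * V * w\<^sup>2 = 0"
    using e2 by (simp add: power2_eq_square algebra_simps)
  have N: "Nf z = E * w + E * (1 - w) * \<rho>"
    unfolding Nf_eq E_def w_def \<rho>_def by (simp add: algebra_simps)
  have s: "Nf z + c = U + V * w" unfolding N U_def V_def by (simp add: algebra_simps)
  have wpos: "w > 0" unfolding w_def by (rule wp_pos)
  have spos: "U + V * w > 0"
  proof -
    have "V \<ge> 0" unfolding V_def using Epos z by (simp add: \<rho>_def)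
    then show ?thesis using Upos wpos by (simp add: add_pos_nonneg)
  qed
  define S where "S = U + V * w"
  have Spos: "S > 0" unfolding S_def by (rule spos)
  have "(S - w * E + w * (E * w + E * (1 - w) * \<rho>)) - P * w * S = U - P * U * w - (P - 1) * V * w\<^sup>2"
    unfolding S_def U_def V_def by (simp add: algebra_simps power2_eq_square)
  then have poly: "S - w * E + w * (E * w + E * (1 - w) * \<rho>) = P * w * S"
    using quad by simp
  have "1 / w - E / S + (E * w + E * (1 - w) * \<rho>) / S = (S - w * E + w * (E * w + E * (1 - w) * \<rho>)) / (w * S)"
    using wpos Spos by (simp add: field_simps)
  also have "\<dots> = P" unfolding poly using wpos Spos by simp
  finally have "1 / w - E / (U + V * w) + (E * w + E * (1 - w) * \<rho>) / (U + V * w) = P" unfolding S_def .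
  then show ?thesis unfolding w_def[symmetric] E_def[symmetric] c_def[symmetric] s unfolding N .
qed

lemma EqA_poly:
  assumes z: "z > 0"
  shows "(Nf z + b / mm) - wp z * exp t + wp z * Nf z = P * wp z * (Nf z + b / mm)"
proof -
  define S where "S = Nf z + b / mm"
  have s: "S > 0" unfolding S_def using Nf_pos[OF z] b mm by (intro add_pos_pos) auto
  have w: "wp z > 0" by (rule wp_pos)
  have "(1 / wp z - exp t / S + Nf z / S) * (wp z * S) = S - wp z * exp t + wp z * Nf z"
    using s w by (simp add: field_simps)
  moreover have "(1 / wp z - exp t / S + Nf z / S) * (wp z * S) = P * wp z * S"
    using EqA[OF z] unfolding S_def[symmetric] by simp
  ultimately show ?thesis unfolding S_def[symmetric] by simp
qed

lemma I2:
  assumes z: "z > 0"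
  shows "w1 z * ((P - 1) * (Nf z + b / mm) + b / mm) = (Nf z + b / mm) - exp t * w1 z * exp (-z)"
proof -
  define w where "w = wp z"
  define N where "N = Nf z"
  define c where "c = b / mm"
  define E where "E = exp t"
  define \<rho> where "\<rho> = exp (-z)"
  have Pq: "P - 1 \<noteq> 0" using P by simp
  have N: "N = E * w + E * (1 - w) * \<rho>" unfolding N_def Nf_eq E_def w_def \<rho>_def by (simp add: algebra_simps)
  have eq: "(N + c) - w * E + w * N = P * w * (N + c)" using EqA_poly[OF z] unfolding N_def c_def E_def w_def .
  have "(P - 1) * ((1 - w) / (P - 1) * ((P - 1) * (N + c) + c)) = (P - 1) * ((N + c) - E * ((1 - w) / (P - 1)) * \<rho>)"
  proof -
    have l: "(P - 1) * ((1 - w) / (P - 1) * ((P - 1) * (N + c) + c)) = (1 - w) * ((P - 1) * (N + c) + c)" using Pq by simp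
    have r: "(P - 1) * ((N + c) - E * ((1 - w) / (P - 1)) * \<rho>) = (P - 1) * (N + c) - E * (1 - w) * \<rho>" using Pq by (simp add: field_simps)
    have "(1 - w) * ((P - 1) * (N + c) + c) - ((P - 1) * (N + c) - E * (1 - w) * \<rho>)
        = ((N + c) - w * E + w * N - P * w * (N + c)) + (E * (1 - w) * \<rho> + E * w - N)"
      by (simp add: algebra_simps)
    moreover have "E * (1 - w) * \<rho> + E * w - N = 0" using N by simp
    ultimately show ?thesis unfolding l r using eq by simp
  qed
  then have "(1 - w) / (P - 1) * ((P - 1) * (N + c) + c) = (N + c) - E * ((1 - w) / (P - 1)) * \<rho>" using Pq by simp
  moreover have "w1 z = (1 - w) / (P - 1)" unfolding w_def by (simp add: w1_def)
  ultimately show ?thesis unfolding N_def[symmetric] c_def[symmetric] E_def[symmetric] \<rho>_def[symmetric] by simp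
qed

lemma hz_form:
  assumes z: "z > 0"
  shows "exp (-z) * (1 / (w1 z * exp (-z)) - exp t / (Nf z + b / mm)) + Nf z / (Nf z + b / mm) = P"
proof -
  define c where "c = b / mm"
  define s where "s = Nf z + c"
  have spos: "s > 0" unfolding s_def c_def using Nf_pos[OF z] b mm by (intro add_pos_pos) auto
  have w1p: "w1 z > 0" by (rule w1_pos[OF z])
  have i2: "w1 z * ((P - 1) * s + c) = s - exp t * w1 z * exp (-z)" using I2[OF z] unfolding s_def c_def .
  have sc: "s = Nf z + c" by (simp add: s_def)
  have "exp (-z) * (1 / (w1 z * exp (-z)) - exp t / s) + Nf z / s = (s - exp t * w1 z * exp (-z) + w1 z * Nf z) / (w1 z * s)"
    using spos w1p by (simp add: field_simps)
  also have "s - exp t * w1 z * exp (-z) + w1 z * Nf z = w1 z * ((P - 1) * s + c) + w1 z * Nf z" using i2 by simp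
  also have "\<dots> = w1 z * (P * s)" unfolding sc by (simp add: algebra_simps)
  also have "\<dots> / (w1 z * s) = P" using spos w1p by simp
  finally show ?thesis unfolding s_def c_def .
qed

lemma g_iff:
  assumes z: "z > 0"
  shows "g z = 0 \<longleftrightarrow> 2 * (1 / (w1 z * exp (-z))) / z - 1 / (w1 z * exp (-z)) + exp t / (Nf z + b / mm) = 0"
proof -
  define s where "s = Nf z + b / mm"
  define c where "c = b / mm"
  define \<rho> where "\<rho> = exp (-z)"
  have spos: "s > 0" unfolding s_def using Nf_pos[OF z] b mm by (intro add_pos_pos) auto
  have w1p: "w1 z > 0" by (rule w1_pos[OF z])
  have rp: "\<rho> > 0" unfolding \<rho>_def by simp
  have i2: "w1 z * ((P - 1) * s + c) = s - exp t * w1 z * \<rho>" using I2[OF z] unfolding s_def c_def \<rho>_def .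
  have gpos: "mm * Nf z + b > 0" using Nf_pos[OF z] mm b by (intro add_pos_pos mult_pos_pos) auto
  have bc: "b / (mm * Nf z + b) = c / s" unfolding c_def s_def using mm b gpos by (simp add: field_simps)
  have "g z = 0 \<longleftrightarrow> H z = 0" using g_H[OF z] gpos by simp
  also have "\<dots> \<longleftrightarrow> z * w1 z * ((P - 1) * s + c) = 2 * s"
    unfolding H_def bc using spos by (simp add: field_simps)
  also have "\<dots> \<longleftrightarrow> z * (s - exp t * w1 z * \<rho>) = 2 * s" using i2 by (simp add: mult.assoc)
  also have "\<dots> \<longleftrightarrow> 2 * (1 / (w1 z * \<rho>)) / z - 1 / (w1 z * \<rho>) + exp t / s = 0"
  proof -
    have "2 * (1 / (w1 z * \<rho>)) / z - 1 / (w1 z * \<rho>) + exp t / s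
        = (2 * s - z * s + exp t * z * w1 z * \<rho>) / (z * w1 z * \<rho> * s)"
      using z w1p rp spos by (simp add: field_simps)
    moreover have "z * w1 z * \<rho> * s > 0" using z w1p rp spos by simp
    ultimately show ?thesis by (auto simp: algebra_simps)
  qed
  finally show ?thesis unfolding s_def \<rho>_def .
qed

end

context wpl
begin

lemma sens_concrete:
  assumes z: "z > 0" and gz: "g z = 0" and uu: "uu \<ge> 0" and Y2: "Y2 \<le> uu\<^sup>2"
  shows "exp t * exp (-uu) * ((1 - uu / z)\<^sup>2 / (wp z * exp t) + Y2 / (z\<^sup>2 * (w1 z * exp t * exp (-z)))
           - 1 / (Nf z + b / mm)) + Nf z / (Nf z + b / mm) \<le> P"
proof -
  define K0 where "K0 = 1 / wp z"
  define K1 where "K1 = 1 / (w1 z * exp (-z))"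
  define D where "D = exp t / (Nf z + b / mm)"
  define C' where "C' = Nf z / (Nf z + b / mm)"
  have wpp: "wp z > 0" by (rule wp_pos)
  have w1p: "w1 z > 0" by (rule w1_pos[OF z])
  have K0p: "K0 > 0" unfolding K0_def using wpp by simp
  have K1p: "K1 > 0" unfolding K1_def using w1p by simp
  have h0: "exp (-0) * (K0 * (1 - 0/z)\<^sup>2 + K1 * 0\<^sup>2 / z\<^sup>2 - D) + C' = P"
    using EqA[OF z] unfolding K0_def D_def C'_def by simp
  have hz: "exp (-z) * (K0 * (1 - z/z)\<^sup>2 + K1 * z\<^sup>2 / z\<^sup>2 - D) + C' = P"
    using hz_form[OF z] z unfolding K1_def D_def C'_def by simp
  have hR: "2 * K1 / z - K1 + D = 0"
    using g_iff[OF z] gz unfolding K1_def D_def by simp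
  have main: "exp (-uu) * (K0 * (1 - uu/z)\<^sup>2 + K1 * uu\<^sup>2 / z\<^sup>2 - D) + C' \<le> P"
    by (rule sens1D[OF z K0p K1p h0 hz hR uu])
  have "Y2 / (z\<^sup>2 * (w1 z * exp t * exp (-z))) \<le> uu\<^sup>2 / (z\<^sup>2 * (w1 z * exp t * exp (-z)))"
    using Y2 z w1p by (intro divide_right_mono) auto
  then have "exp t * exp (-uu) * ((1 - uu / z)\<^sup>2 / (wp z * exp t) + Y2 / (z\<^sup>2 * (w1 z * exp t * exp (-z)))
           - 1 / (Nf z + b / mm)) \<le> exp t * exp (-uu) * ((1 - uu / z)\<^sup>2 / (wp z * exp t) + uu\<^sup>2 / (z\<^sup>2 * (w1 z * exp t * exp (-z)))
           - 1 / (Nf z + b / mm))"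
    by (intro mult_left_mono) auto
  also have "exp t * exp (-uu) * ((1 - uu / z)\<^sup>2 / (wp z * exp t) + uu\<^sup>2 / (z\<^sup>2 * (w1 z * exp t * exp (-z)))
           - 1 / (Nf z + b / mm)) = exp (-uu) * (K0 * (1 - uu/z)\<^sup>2 + K1 * uu\<^sup>2 / z\<^sup>2 - D)"
    unfolding K0_def K1_def D_def using z wpp w1p by (simp add: field_simps)
  finally have le: "exp t * exp (-uu) * ((1 - uu / z)\<^sup>2 / (wp z * exp t) + Y2 / (z\<^sup>2 * (w1 z * exp t * exp (-z)))
           - 1 / (Nf z + b / mm)) \<le> exp (-uu) * (K0 * (1 - uu/z)\<^sup>2 + K1 * uu\<^sup>2 / z\<^sup>2 - D)" .
  show ?thesis using le main unfolding C'_def by linarith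
qed

end

theorem theorem8:
  fixes p m :: nat and a b :: real and u v \<beta> :: "real vec"
  assumes hp: "p \<ge> 2" and hm: "m \<ge> 1" and ha: "a > 0" and hb: "b > 0"
    and du: "dim_vec u = p - 1" and dv: "dim_vec v = p - 1" and dbeta: "dim_vec \<beta> = p"
    and huv: "\<forall>i<p - 1. u $ i < v $ i"
    and hbeta: "\<forall>i<p - 1. \<beta> $ (Suc i) \<noteq> 0"
  defines "d \<equiv> vec (p - 1) (\<lambda>i. if \<beta> $ (Suc i) > 0 then v $ i else u $ i)"
  defines "wp \<equiv> (\<lambda>z::real. 2 / (real p + sqrt ((real p - 2)\<^sup>2 + 4 * (real p - 1) *
              ((1 + real m / b * exp (fvec d \<bullet> \<beta>)) / (1 + real m / b * exp (fvec d \<bullet> \<beta> - z))))))"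
  defines "w1 \<equiv> (\<lambda>z::real. (1 - wp z) / (real p - 1))"
  defines "g \<equiv> (\<lambda>z::real. real m * ((real p - 1) * w1 z * exp (fvec d \<bullet> \<beta> - z) + wp z * exp (fvec d \<bullet> \<beta>))
                  * (z * (real p - 1) * w1 z - 2) + b * (z * real p * w1 z - 2))"
  shows "(\<exists>!z. z > 0 \<and> g z = 0) \<and>
    (\<forall>z. z > 0 \<and> g z = 0 \<and> z \<le> Min ((\<lambda>i. \<bar>\<beta> $ (Suc i)\<bar> * (v $ i - u $ i)) ` {0..<p - 1}) \<longrightarrow>
       D_optimal p a b m (region p u v) \<beta>
         (\<lambda>x. if x = d then wp z
              else if (\<exists>i<p - 1. x = d - (z / \<beta> $ (Suc i)) \<cdot>\<^sub>v unit_vec (p - 1) i) then w1 z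
              else 0))"
proof -
  define q where "q = p - 1"
  have pq: "p = Suc q" using hp unfolding q_def by simp
  have p0: "p > 0" using hp by simp
  have Pr: "real p \<ge> 2" using hp by simp
  have mr: "real m > 0" using hm by simp
  interpret W: wpl "real p" "real m" b "fvec d \<bullet> \<beta>" wp w1 g
    by unfold_locales (use Pr mr hb in \<open>simp_all add: wp_def w1_def g_def\<close>)
  have dd: "dim_vec d = q" unfolding d_def q_def by simp
  have d_idx: "d $ i = (if \<beta> $ Suc i > 0 then v $ i else u $ i)" if "i < q" for i
    using that unfolding d_def q_def by simp
  have db: "dim_vec \<beta> = Suc q" using dbeta pq by simp
  have bne: "\<beta> $ Suc i \<noteq> 0" if "i < q" for i using hbeta that unfolding q_def by simp
  have uv: "u $ i < v $ i" if "i < q" for i using huv that unfolding q_def by simp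
  have d_in: "u $ i \<le> d $ i \<and> d $ i \<le> v $ i" if "i < q" for i using uv[OF that] d_idx[OF that] by auto
  show ?thesis
  proof (intro conjI allI impI)
    show "\<exists>!z. z > 0 \<and> g z = 0" by (rule W.g_unique)
  next
    fix z assume H: "0 < z \<and> g z = 0 \<and> z \<le> Min ((\<lambda>i. \<bar>\<beta> $ Suc i\<bar> * (v $ i - u $ i)) ` {0..<p - 1})"
    then have z: "z > 0" and gz: "g z = 0" by auto
    have zmin: "z \<le> \<bar>\<beta> $ Suc i\<bar> * (v $ i - u $ i)" if "i < q" for i
    proof -
      have "Min ((\<lambda>i. \<bar>\<beta> $ Suc i\<bar> * (v $ i - u $ i)) ` {0..<p - 1}) \<le> \<bar>\<beta> $ Suc i\<bar> * (v $ i - u $ i)"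
        using that unfolding q_def by (intro Min_le) auto
      then show ?thesis using H by linarith
    qed
    define ws where "ws = (\<lambda>x. if x = d then wp z
              else if (\<exists>i<q. x = d - (z / \<beta> $ (Suc i)) \<cdot>\<^sub>v unit_vec q i) then w1 z
              else 0)"
    define pt where "pt l = (if l = 0 then d else d - (z / \<beta> $ l) \<cdot>\<^sub>v unit_vec q (l - 1))" for l
    have wpp: "wp z > 0" by (rule W.wp_pos)
    have w1p: "w1 z > 0" by (rule W.w1_pos[OF z])
    have pt_dim: "dim_vec (pt l) = q" for l unfolding pt_def using dd by simp
    have pt_idx: "pt l $ k = d $ k - (if l \<noteq> 0 \<and> k = l - 1 then z / \<beta> $ l else 0)" if "k < q" for l k
      unfolding pt_def using that dd by (auto simp: unit_vec_def)
    have pt_inj: "inj_on pt {..<p}"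
    proof (rule inj_onI)
      fix l l' assume l: "l \<in> {..<p}" and l': "l' \<in> {..<p}" and eq: "pt l = pt l'"
      show "l = l'"
      proof (rule ccontr)
        assume ne: "l \<noteq> l'"
        have key: "False" if a: "k \<noteq> 0" "k < p" "k \<noteq> k'" "pt k = pt k'" for k k'
        proof -
          have km: "k - 1 < q" using a pq by simp
          have "pt k $ (k - 1) = pt k' $ (k - 1)" using a by simp
          then have "z / \<beta> $ k = 0" using a km unfolding pt_idx[OF km] by auto
          moreover have "\<beta> $ k \<noteq> 0" using bne[OF km] a by simp
          ultimately show False using z by simp
        qed
        show False
        proof (cases "l = 0")
          case True
          then have "l' \<noteq> 0" using ne by simp
          then show False using key[of l' l] l' ne eq by auto
        next
          case False
          then show False using key[of l l'] l ne eq by auto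
        qed
      qed
    qed
    have pt0: "pt 0 = d" unfolding pt_def by simp
    have ws_pt: "ws (pt l) = (if l = 0 then wp z else w1 z)" if "l < p" for l
    proof (cases "l = 0")
      case True then show ?thesis using pt0 unfolding ws_def by simp
    next
      case False
      have "pt l \<noteq> pt 0" using pt_inj that False p0 unfolding inj_on_def by blast
      then have "pt l \<noteq> d" using pt0 by simp
      moreover have "\<exists>i<q. pt l = d - (z / \<beta> $ (Suc i)) \<cdot>\<^sub>v unit_vec q i"
        using False that pq unfolding pt_def by (intro exI[of _ "l - 1"]) auto
      ultimately show ?thesis unfolding ws_def using False by simp
    qed
    have supp_ws: "supp ws = pt ` {..<p}"
    proof
      show "supp ws \<subseteq> pt ` {..<p}"
      proof
        fix x assume "x \<in> supp ws"
        then have nz: "ws x \<noteq> 0" unfolding supp_def by simp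
        show "x \<in> pt ` {..<p}"
        proof (cases "x = d")
          case True then show ?thesis using pt0 p0 by (metis image_eqI lessThan_iff)
        next
          case False
          then obtain i where i: "i < q" "x = d - (z / \<beta> $ (Suc i)) \<cdot>\<^sub>v unit_vec q i"
            using nz unfolding ws_def by (auto split: if_splits)
          then have "x = pt (Suc i)" unfolding pt_def by simp
          moreover have "Suc i < p" using i pq by simp
          ultimately show ?thesis by blast
        qed
      qed
      show "pt ` {..<p} \<subseteq> supp ws"
        using ws_pt wpp w1p unfolding supp_def by (auto split: if_splits)
    qed
    have pt_region: "pt l \<in> region p u v" if "l < p" for l
    proof -
    have A: "dim_vec (pt l) = p - 1" using pt_dim q_def by simp
    have B: "\<forall>k<p - 1. u $ k \<le> pt l $ k \<and> pt l $ k \<le> v $ k"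
    proof (intro allI impI)
      fix k assume "k < p - 1"
      then have k: "k < q" unfolding q_def .
      show "u $ k \<le> pt l $ k \<and> pt l $ k \<le> v $ k"
      proof (cases "l \<noteq> 0 \<and> k = l - 1")
        case False
        then have "pt l $ k = d $ k" unfolding pt_idx[OF k] by auto
        then show ?thesis using d_in[OF k] by simp
      next
        case True
        then have lk: "l = Suc k" by simp
        have zm: "z \<le> \<bar>\<beta> $ Suc k\<bar> * (v $ k - u $ k)" by (rule zmin[OF k])
        show ?thesis
        proof (cases "\<beta> $ Suc k > 0")
          case bp: True
          have dk: "d $ k = v $ k" using d_idx[OF k] bp by simp
          have "z / \<beta> $ Suc k \<le> v $ k - u $ k" using zm bp by (simp add: pos_divide_le_eq mult.commute)
          moreover have "0 \<le> z / \<beta> $ Suc k" using z bp by (intro divide_nonneg_pos) auto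
          moreover have "pt l $ k = v $ k - z / \<beta> $ Suc k" unfolding pt_idx[OF k] using lk dk by simp
          ultimately show ?thesis using uv[OF k] by linarith
        next
          case bn: False
          then have bn': "\<beta> $ Suc k < 0" using bne[OF k] by linarith
          have dk: "d $ k = u $ k" using d_idx[OF k] bn by simp
          have zm': "z \<le> (- \<beta> $ Suc k) * (v $ k - u $ k)" using zm bn' by simp
          have "z / (- \<beta> $ Suc k) \<le> v $ k - u $ k"
            using zm' bn' by (subst pos_divide_le_eq) (auto simp: mult.commute)
          then have "- (z / \<beta> $ Suc k) \<le> v $ k - u $ k" by simp
          moreover have "z / \<beta> $ Suc k \<le> 0" using z bn' by (intro divide_nonneg_nonpos) auto
          moreover have "pt l $ k = u $ k - z / \<beta> $ Suc k" unfolding pt_idx[OF k] using lk dk by simp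
          ultimately show ?thesis using uv[OF k] by linarith
        qed
      qed
    qed
    show ?thesis unfolding region_def using A B by simp
    qed
    have fin_ws: "finite (supp ws)" unfolding supp_ws by simp
    have sum_ws: "(\<Sum>x\<in>supp ws. ws x) = 1"
    proof -
      have "(\<Sum>x\<in>supp ws. ws x) = (\<Sum>l<p. ws (pt l))" unfolding supp_ws by (simp add: sum.reindex[OF pt_inj])
      also have "\<dots> = (\<Sum>l<Suc q. if l = 0 then wp z else w1 z)" using ws_pt pq by (intro sum.cong) auto
      also have "\<dots> = wp z + real q * w1 z" by (simp only: sum.lessThan_Suc_shift) simp
      also have "\<dots> = 1"
      proof -
        have rq: "real p - 1 = real q" using pq by simp
        have q0: "real q \<noteq> 0" using hp unfolding q_def by simp
        show ?thesis unfolding w1_def rq using q0 by simp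
      qed
      finally show ?thesis .
    qed
    have des_ws: "is_design (region p u v) ws"
      unfolding is_design_def
    proof (intro conjI allI)
      show "finite (supp ws)" by (rule fin_ws)
      show "supp ws \<subseteq> region p u v" unfolding supp_ws using pt_region by auto
      fix x show "0 \<le> ws x" unfolding ws_def using wpp w1p by auto
    next
      show "(\<Sum>x\<in>supp ws. ws x) = 1" by (rule sum_ws)
    qed
    define E where "E = exp (fvec d \<bullet> \<beta>)"
    define \<rho> where "\<rho> = exp (- z)"
    define c where "c = b / real m"
    have cpos: "c > 0" unfolding c_def using hb mr by simp
    define \<mu> where "\<mu> l = ws (pt l) * exp (fvec (pt l) \<bullet> \<beta>)" for l
    define Fl where "Fl l j = fvec (pt l) $ j" for l j
    have Yeq: "Xg (supp ws) (\<lambda>x. ws x * exp (fvec x \<bullet> \<beta>)) (\<lambda>x j. fvec x $ j) c = Xg {..<p} \<mu> Fl c"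
      unfolding supp_ws Xg_reindex[OF pt_inj] \<mu>_def Fl_def ..
    have dot_pt: "fvec (pt l) \<bullet> \<beta> = fvec d \<bullet> \<beta> - (if l \<noteq> 0 then z else 0)" if l: "l < p" for l
    proof -
      have "fvec (pt l) \<bullet> \<beta> = \<beta> $ 0 + (\<Sum>k<q. pt l $ k * \<beta> $ Suc k)" by (rule fvec_dot[OF pt_dim db])
      also have "(\<Sum>k<q. pt l $ k * \<beta> $ Suc k) = (\<Sum>k<q. d $ k * \<beta> $ Suc k - (if k = l - 1 \<and> l \<noteq> 0 then z / \<beta> $ l * \<beta> $ Suc k else 0))"
        by (intro sum.cong refl) (auto simp: pt_idx left_diff_distrib)
      also have "\<beta> $ 0 + (\<Sum>k<q. d $ k * \<beta> $ Suc k - (if k = l - 1 \<and> l \<noteq> 0 then z / \<beta> $ l * \<beta> $ Suc k else 0))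
          = \<beta> $ 0 + (\<Sum>k<q. d $ k * \<beta> $ Suc k) - (\<Sum>k<q. if k = l - 1 \<and> l \<noteq> 0 then z / \<beta> $ l * \<beta> $ Suc k else 0)"
        by (simp only: sum_subtractf add_diff_eq)
      also have "(\<Sum>k<q. if k = l - 1 \<and> l \<noteq> 0 then z / \<beta> $ l * \<beta> $ Suc k else 0) = (if l \<noteq> 0 then z else 0)"
      proof (cases "l = 0")
        case True then show ?thesis by simp
      next
        case False
        then have lq: "l - 1 < q" and sl: "Suc (l - 1) = l" using l pq by auto
        have "(\<Sum>k<q. if k = l - 1 \<and> l \<noteq> 0 then z / \<beta> $ l * \<beta> $ Suc k else 0) = (\<Sum>k<q. if k = l - 1 then z / \<beta> $ l * \<beta> $ Suc k else 0)"
          using False by simp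
        also have "\<dots> = z / \<beta> $ l * \<beta> $ l" using lq sl by (simp add: sum.delta')
        also have "\<dots> = z" using bne[OF lq] sl by simp
        finally show ?thesis using False by simp
      qed
      also have "\<beta> $ 0 + (\<Sum>k<q. d $ k * \<beta> $ Suc k) = fvec d \<bullet> \<beta>" by (rule fvec_dot[OF dd db, symmetric])
      finally show ?thesis .
    qed
    have mu_val: "\<mu> l = (if l = 0 then wp z * E else w1 z * (E * \<rho>))" if "l < p" for l
      unfolding \<mu>_def ws_pt[OF that] dot_pt[OF that] E_def \<rho>_def by (simp add: exp_diff exp_minus field_simps)
    have mu_pos: "\<forall>l<p. 0 < \<mu> l" using mu_val wpp w1p unfolding E_def \<rho>_def by simp
    have Nsum: "(\<Sum>l<p. \<mu> l) = W.Nf z"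
    proof -
      have "(\<Sum>l<p. \<mu> l) = (\<Sum>l<Suc q. if l = 0 then wp z * E else w1 z * (E * \<rho>))"
        using mu_val pq by (intro sum.cong) auto
      also have "\<dots> = wp z * E + real q * (w1 z * (E * \<rho>))" by (simp only: sum.lessThan_Suc_shift) simp
      also have "\<dots> = W.Nf z" unfolding W.Nf_def E_def \<rho>_def using pq by (simp add: exp_diff exp_minus field_simps)
      finally show ?thesis .
    qed
    have Fl_val: "Fl l j = fvec d $ j - (if l \<noteq> 0 \<and> j = l then z / \<beta> $ l else 0)" if "l < p" "j < p" for l j
    proof (cases j)
      case 0 then show ?thesis unfolding Fl_def fvec_def by simp
    next
      case (Suc k)
      then have k: "k < q" using that pq by simp
      show ?thesis unfolding Fl_def Suc fvec_def using pt_idx[OF k, of l] by auto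
    qed
    have Fl0: "\<forall>l<p. Fl l 0 = 1" unfolding Fl_def fvec_def by simp
    have span: "\<forall>i<p. vv i = 0" if hs: "\<forall>l\<in>{..<p}. (\<Sum>i<p. Fl l i * vv i) = 0" for vv
    proof -
      define T where "T = (\<Sum>i<p. fvec d $ i * vv i)"
      have rows: "(\<Sum>i<p. Fl l i * vv i) = T - (if l \<noteq> 0 then z / \<beta> $ l * vv l else 0)" if l: "l < p" for l
      proof -
        have "(\<Sum>i<p. Fl l i * vv i) = (\<Sum>i<p. fvec d $ i * vv i - (if i = l then (if l \<noteq> 0 then z / \<beta> $ l * vv l else 0) else 0))"
          using l by (intro sum.cong refl) (auto simp: Fl_val left_diff_distrib)
        also have "\<dots> = T - (if l \<noteq> 0 then z / \<beta> $ l * vv l else 0)"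
          unfolding T_def using l by (simp add: sum_subtractf sum.delta)
        finally show ?thesis .
      qed
      have T0: "T = 0" using hs rows[of 0] p0 by simp
      have vS: "vv (Suc k) = 0" if k: "k < q" for k
      proof -
        have "z / \<beta> $ Suc k * vv (Suc k) = 0" using hs rows[of "Suc k"] k pq T0 by simp
        then show ?thesis using z bne[OF k] by simp
      qed
      have "T = fvec d $ 0 * vv 0 + (\<Sum>k<q. fvec d $ Suc k * vv (Suc k))" unfolding T_def pq by (rule sum.lessThan_Suc_shift)
      then have "T = vv 0" using vS unfolding fvec_def by simp
      then have v0: "vv 0 = 0" using T0 by simp
      show ?thesis
      proof (intro allI impI)
        fix i assume i: "i < p"
        show "vv i = 0"
        proof (cases i)
          case 0 then show ?thesis using v0 by simp
        next
          case (Suc k) then show ?thesis using vS i pq by simp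
        qed
      qed
    qed
    have main: "det (M_PG p a b m w' \<beta>) \<le> det (M_PG p a b m ws \<beta>) \<and> 0 < det (fm p (Xg {..<p} \<mu> Fl c))"
      if D: "is_design (region p u v) w'" for w'
    proof -
      have fS: "finite (supp w')" and sub: "supp w' \<subseteq> region p u v" and w'0: "\<forall>x. 0 \<le> w' x"
        and w'1: "(\<Sum>x\<in>supp w'. w' x) = 1" using D unfolding is_design_def by auto
      have xr: "dim_vec x = q \<and> (\<forall>i<q. u $ i \<le> x $ i \<and> x $ i \<le> v $ i)" if "x \<in> supp w'" for x
        using sub that unfolding region_def q_def by auto
      define yv where "yv x i = \<beta> $ Suc i * (x $ i - d $ i)" for x :: "real vec" and i
      define Sx where "Sx x = (\<Sum>i<q. yv x i)" for x
      define ax where "ax x l = (if l = 0 then 1 + Sx x / z else - yv x (l - 1) / z)" for x l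
      have sumax: "\<forall>x\<in>supp w'. (\<Sum>l<p. ax x l) = 1"
      proof
        fix x
        have "(\<Sum>l<p. ax x l) = ax x 0 + (\<Sum>k<q. ax x (Suc k))" unfolding pq by (rule sum.lessThan_Suc_shift)
        also have "\<dots> = 1 + Sx x / z - (\<Sum>k<q. yv x k) / z" unfolding ax_def by (simp add: sum_negf sum_divide_distrib)
        also have "\<dots> = 1" unfolding Sx_def by simp
        finally show "(\<Sum>l<p. ax x l) = 1" .
      qed
      have coef: "\<forall>x\<in>supp w'. \<forall>j<p. fvec x $ j = (\<Sum>l<p. ax x l * Fl l j)"
      proof (intro ballI allI impI)
        fix x j assume x: "x \<in> supp w'" and j: "j < p"
        have "(\<Sum>l<p. ax x l * Fl l j) = (\<Sum>l<p. fvec d $ j * ax x l - (if l = j then (if j \<noteq> 0 then ax x j * (z / \<beta> $ j) else 0) else 0))"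
          using j by (intro sum.cong refl) (auto simp: Fl_val right_diff_distrib mult.commute)
        also have "\<dots> = fvec d $ j * (\<Sum>l<p. ax x l) - (if j \<noteq> 0 then ax x j * (z / \<beta> $ j) else 0)"
          using j by (simp add: sum_subtractf sum.delta sum_distrib_left)
        also have "\<dots> = fvec d $ j - (if j \<noteq> 0 then ax x j * (z / \<beta> $ j) else 0)" using sumax x by simp
        also have "\<dots> = fvec x $ j"
        proof (cases j)
          case 0 then show ?thesis unfolding fvec_def by simp
        next
          case (Suc k)
          then have k: "k < q" using j pq by simp
          have "ax x j * (z / \<beta> $ j) = - (x $ k - d $ k)"
            unfolding ax_def yv_def Suc using z bne[OF k] by (simp add: field_simps)
          then show ?thesis unfolding Suc fvec_def using xr[OF x] dd k by simp
        qed
        finally show "fvec x $ j = (\<Sum>l<p. ax x l * Fl l j)" ..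
      qed
      have sens: "\<forall>x\<in>supp w'. exp (fvec x \<bullet> \<beta>) * ((\<Sum>l<p. (ax x l)\<^sup>2 / \<mu> l) - 1 / ((\<Sum>l<p. \<mu> l) + c)) + (\<Sum>l<p. \<mu> l) / ((\<Sum>l<p. \<mu> l) + c) \<le> real p"
      proof
        fix x assume x: "x \<in> supp w'"
        have xd: "dim_vec x = q" using xr[OF x] by simp
        have yneg: "\<forall>k\<in>{..<q}. yv x k \<le> 0"
        proof
          fix k assume "k \<in> {..<q}"
          then have k: "k < q" by simp
          have xk: "u $ k \<le> x $ k \<and> x $ k \<le> v $ k" using xr[OF x] k by simp
          show "yv x k \<le> 0"
          proof (cases "\<beta> $ Suc k > 0")
            case True
            then have "d $ k = v $ k" using d_idx[OF k] by simp
            then show ?thesis unfolding yv_def using True xk by (intro mult_nonneg_nonpos) auto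
          next
            case False
            then have bn: "\<beta> $ Suc k < 0" using bne[OF k] by linarith
            then have "d $ k = u $ k" using d_idx[OF k] by simp
            then show ?thesis unfolding yv_def using bn xk by (intro mult_nonpos_nonneg) auto
          qed
        qed
        define uu where "uu = - Sx x"
        have "(\<Sum>i<q. yv x i) \<le> 0" using yneg by (intro sum_nonpos) auto
        then have uu0: "uu \<ge> 0" unfolding uu_def Sx_def by simp
        have Y2: "(\<Sum>k<q. (yv x k)\<^sup>2) \<le> uu\<^sup>2"
          using sumsq_le_sqsum[of "{..<q}" "yv x"] yneg unfolding uu_def Sx_def by simp
        have lam: "exp (fvec x \<bullet> \<beta>) = E * exp (-uu)"
        proof -
          have "fvec x \<bullet> \<beta> = fvec d \<bullet> \<beta> + Sx x"
            unfolding fvec_dot[OF xd db] fvec_dot[OF dd db] Sx_def yv_def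
            by (simp add: sum.distrib[symmetric] algebra_simps)
          then show ?thesis unfolding E_def uu_def by (simp add: exp_add)
        qed
        have sumsq: "(\<Sum>l<p. (ax x l)\<^sup>2 / \<mu> l) = (1 - uu / z)\<^sup>2 / (wp z * E) + (\<Sum>k<q. (yv x k)\<^sup>2) / (z\<^sup>2 * (w1 z * E * \<rho>))"
        proof -
          have "(\<Sum>l<p. (ax x l)\<^sup>2 / \<mu> l) = (ax x 0)\<^sup>2 / \<mu> 0 + (\<Sum>k<q. (ax x (Suc k))\<^sup>2 / \<mu> (Suc k))"
            unfolding pq by (rule sum.lessThan_Suc_shift)
          also have "(\<Sum>k<q. (ax x (Suc k))\<^sup>2 / \<mu> (Suc k)) = (\<Sum>k<q. (yv x k)\<^sup>2 / (z\<^sup>2 * (w1 z * E * \<rho>)))"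
            using mu_val pq by (intro sum.cong refl) (simp add: ax_def power_divide mult.assoc)
          also have "\<dots> = (\<Sum>k<q. (yv x k)\<^sup>2) / (z\<^sup>2 * (w1 z * E * \<rho>))" by (simp add: sum_divide_distrib)
          also have "(ax x 0)\<^sup>2 / \<mu> 0 = (1 - uu / z)\<^sup>2 / (wp z * E)"
            using mu_val[of 0] p0 unfolding ax_def uu_def by simp
          finally show ?thesis .
        qed
        have "exp (fvec x \<bullet> \<beta>) * ((\<Sum>l<p. (ax x l)\<^sup>2 / \<mu> l) - 1 / ((\<Sum>l<p. \<mu> l) + c)) + (\<Sum>l<p. \<mu> l) / ((\<Sum>l<p. \<mu> l) + c)
          = exp (fvec d \<bullet> \<beta>) * exp (-uu) * ((1 - uu / z)\<^sup>2 / (wp z * exp (fvec d \<bullet> \<beta>)) + (\<Sum>k<q. (yv x k)\<^sup>2) / (z\<^sup>2 * (w1 z * exp (fvec d \<bullet> \<beta>) * exp (-z)))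
           - 1 / (W.Nf z + b / real m)) + W.Nf z / (W.Nf z + b / real m)"
          unfolding lam sumsq Nsum E_def \<rho>_def c_def ..
        also have "\<dots> \<le> real p" by (rule W.sens_concrete[OF z gz uu0 Y2])
        finally show "exp (fvec x \<bullet> \<beta>) * ((\<Sum>l<p. (ax x l)\<^sup>2 / \<mu> l) - 1 / ((\<Sum>l<p. \<mu> l) + c)) + (\<Sum>l<p. \<mu> l) / ((\<Sum>l<p. \<mu> l) + c) \<le> real p" .
      qed
      have og: "det (fm p (Xg (supp w') (\<lambda>x. w' x * exp (fvec x \<bullet> \<beta>)) (\<lambda>x j. fvec x $ j) c)) \<le> det (fm p (Xg {..<p} \<mu> Fl c))
          \<and> 0 < det (fm p (Xg {..<p} \<mu> Fl c))"
      proof (rule opt_generic[where lam = "\<lambda>x. exp (fvec x \<bullet> \<beta>)" and w' = w' and ax = ax])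
        show "0 < p" by (rule p0)
        show "finite (supp w')" by (rule fS)
        show "0 < c" by (rule cpos)
        show "\<forall>x\<in>supp w'. fvec x $ 0 = 1" unfolding fvec_def by simp
        show "\<forall>l<p. Fl l 0 = 1" by (rule Fl0)
        show "\<forall>l<p. 0 < \<mu> l" by (rule mu_pos)
        show "\<And>vv. \<forall>l\<in>{..<p}. (\<Sum>i<p. Fl l i * vv i) = 0 \<Longrightarrow> \<forall>i<p. vv i = 0" by (rule span)
        show "\<forall>x\<in>supp w'. w' x * exp (fvec x \<bullet> \<beta>) = w' x * exp (fvec x \<bullet> \<beta>)" by simp
        show "\<forall>x\<in>supp w'. 0 \<le> w' x" using w'0 by simp
        show "\<forall>x\<in>supp w'. 0 < exp (fvec x \<bullet> \<beta>)" by simp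
        show "(\<Sum>x\<in>supp w'. w' x) = 1" by (rule w'1)
        show "\<forall>x\<in>supp w'. \<forall>i<p. fvec x $ i = (\<Sum>l<p. ax x l * Fl l i)" by (rule coef)
        show "\<forall>x\<in>supp w'. (\<Sum>l<p. ax x l) = 1" by (rule sumax)
        show "\<forall>x\<in>supp w'. exp (fvec x \<bullet> \<beta>) * ((\<Sum>l<p. (ax x l)\<^sup>2 / \<mu> l) - 1 / ((\<Sum>l<p. \<mu> l) + c)) + (\<Sum>l<p. \<mu> l) / ((\<Sum>l<p. \<mu> l) + c) \<le> real p"
          by (rule sens)
      qed
      have ab: "0 \<le> (a / b) ^ p" using ha hb by simp
      have "det (M_PG p a b m w' \<beta>) \<le> det (M_PG p a b m ws \<beta>)"
        unfolding det_Mpg[OF p0] c_def[symmetric] Yeq using og ab by (intro mult_left_mono) auto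
      then show ?thesis using og by simp
    qed
    have detpos: "det (M_PG p a b m ws \<beta>) \<noteq> 0"
    proof -
      have "0 < det (fm p (Xg {..<p} \<mu> Fl c))" using main[OF des_ws] by simp
      moreover have "0 < (a / b) ^ p" using ha hb by simp
      ultimately show ?thesis unfolding det_Mpg[OF p0] c_def[symmetric] Yeq using ha hb by simp
    qed
    have "D_optimal p a b m (region p u v) \<beta> ws"
      unfolding D_optimal_def using des_ws detpos main by blast
    then show "D_optimal p a b m (region p u v) \<beta>
         (\<lambda>x. if x = d then wp z
              else if (\<exists>i<p - 1. x = d - (z / \<beta> $ (Suc i)) \<cdot>\<^sub>v unit_vec (p - 1) i) then w1 z
              else 0)" unfolding ws_def q_def .
  qed
qed

end
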